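(* Let $n$ be the number of workers, let $p,k_A,k_B$ be positive integers, and let $q$ be an odd integer with $q\ge n>2k_Ak_Bp-1$; $\theta=2\pi/q$. Let $\mathbf{A}\in\mathbb{R}^{t\times r}$ be partitioned into $2p$ block-rows and $k_A$ block-columns, with blocks $\mathbf{A}_{(\langle i,l\rangle,j)}$, $i\in\{0,\dots,p-1\}$, $l\in\{0,1\}$, $j\in\{0,\dots,k_A-1\}$, and $\mathbf{B}\in\mathbb{R}^{t\times w}$ into $2p$ block-rows and $k_B$ block-columns, blocks $\mathbf{B}_{(\langle i,l\rangle,j)}$; each block has $\zeta=t/(2p)$ rows. Worker $k\in\{0,\dots,n-1\}$ stores $$\hat{\mathbf{A}}_k=\sum_{i=0}^{p-1}\sum_{j=0}^{k_A-1}\big(\mathbf{R}_{-\theta}^{k((j-1)p+i+1)}\otimes\mathbf{I}_\zeta\big)\begin{bmatrix}\mathbf{A}_{(\langle i,0\rangle,j)}\\ \mathbf{A}_{(\langle i,1\rangle,j)}\end{bmatrix},\quad \hat{\mathbf{B}}_k=\sum_{i=0}^{p-1}\sum_{j=0}^{k_B-1}\big(\mathbf{R}_{\theta}^{k(p-1-i+jpk_A)}\otimes\mathbf{I}_\zeta\big)\begin{bmatrix}\mathbf{B}_{(\langle i,0\rangle,j)}\\ \mathbf{B}_{(\langle i,1\rangle,j)}\end{bmatrix}$$ and returns $\hat{\mathbf{A}}_k^T\hat{\mathbf{B}}_k$. Then the threshold of the scheme is $2pk_Ak_B-1$, i.e. $\mathbf{A}^T\mathbf{B}$ can be recovered from the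 results of any $2pk_Ak_B-1$ workers, and the worst-case condition number of the recovery matrices is upper bounded by $O(q^{\,q-2pk_Ak_B+1+c_1})$, $c_1=5.5$.
   Context: $\mathbf{R}_\phi=\begin{bmatrix}\cos\phi&-\sin\phi\\ \sin\phi&\cos\phi\end{bmatrix}$, $\otimes$ is the Kronecker product, $\omega_q=e^{\mathrm{i}2\pi/q}$. For responding workers $i_0,\dots,i_{\tau-1}$ ($\tau=2pk_Ak_B-1$), the recovery matrix is the $\tau\times\tau$ complex matrix $\mathbf{G}^{vand}_{\mathcal I}$ whose rows are indexed by $e=-(pk_Ak_B-1),\dots,pk_Ak_B-1$ and whose $(e,b)$ entry is $\omega_q^{e\,i_b}$; the decoder solves systems $\hat{\mathbf{m}}\,\mathbf{G}^{vand}_{\mathcal I}=\mathbf{c}$ for each entry position of the outputs. $\kappa(\mathbf{M})=\|\mathbf{M}\|\|\mathbf{M}^{-1}\|$ with $\|\cdot\|$ the largest singular value. *)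

theory Defs
  imports Complex_Main
begin

text \<open>Matrices are functions nat => nat => 'a; dimensions are carried explicitly.\<close>

definition mmul :: "nat \<Rightarrow> (nat \<Rightarrow> nat \<Rightarrow> 'a::comm_semiring_1) \<Rightarrow> (nat \<Rightarrow> nat \<Rightarrow> 'a) \<Rightarrow> nat \<Rightarrow> nat \<Rightarrow> 'a"
  where "mmul k M N a b = (\<Sum>c<k. M a c * N c b)"

definition mtrans :: "(nat \<Rightarrow> nat \<Rightarrow> 'a) \<Rightarrow> nat \<Rightarrow> nat \<Rightarrow> 'a"
  where "mtrans M a b = M b a"

definition mid :: "nat \<Rightarrow> nat \<Rightarrow> nat \<Rightarrow> 'a::zero_neq_one"
  where "mid n a b = (if a = b \<and> a < n then 1 else 0)"

definition minv :: "nat \<Rightarrow> (nat \<Rightarrow> nat \<Rightarrow> 'a::comm_semiring_1) \<Rightarrow> nat \<Rightarrow> nat \<Rightarrow> 'a"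
  where "minv n M = (THE N. (\<forall>a b. (n \<le> a \<or> n \<le> b) \<longrightarrow> N a b = 0) \<and>
     (\<forall>a<n. \<forall>b<n. mmul n N M a b = mid n a b \<and> mmul n M N a b = mid n a b))"

fun mpow :: "nat \<Rightarrow> (nat \<Rightarrow> nat \<Rightarrow> 'a::comm_semiring_1) \<Rightarrow> nat \<Rightarrow> nat \<Rightarrow> nat \<Rightarrow> 'a" where
  "mpow n M 0 = mid n"
| "mpow n M (Suc m) = mmul n M (mpow n M m)"

definition mipow :: "nat \<Rightarrow> (nat \<Rightarrow> nat \<Rightarrow> 'a::comm_semiring_1) \<Rightarrow> int \<Rightarrow> nat \<Rightarrow> nat \<Rightarrow> 'a" where
  "mipow n M m = (if 0 \<le> m then mpow n M (nat m) else mpow n (minv n M) (nat (- m)))"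

definition rot :: "real \<Rightarrow> nat \<Rightarrow> nat \<Rightarrow> real" where
  "rot \<phi> a b = (if a = 0 \<and> b = 0 then cos \<phi> else if a = 0 \<and> b = 1 then - sin \<phi>
      else if a = 1 \<and> b = 0 then sin \<phi> else if a = 1 \<and> b = 1 then cos \<phi> else 0)"

definition kron :: "nat \<Rightarrow> nat \<Rightarrow> (nat \<Rightarrow> nat \<Rightarrow> 'a::times) \<Rightarrow> (nat \<Rightarrow> nat \<Rightarrow> 'a) \<Rightarrow> nat \<Rightarrow> nat \<Rightarrow> 'a" where
  "kron mS nS R S a b = R (a div mS) (b div nS) * S (a mod mS) (b mod nS)"

text \<open>Block-row index of \<langle>i,l\<rangle> (block rows ordered 2i+l).\<close>
definition bidx :: "nat \<Rightarrow> nat \<Rightarrow> nat" where "bidx i l = 2 * i + l"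

definition blk :: "nat \<Rightarrow> nat \<Rightarrow> (nat \<Rightarrow> nat \<Rightarrow> 'a) \<Rightarrow> nat \<Rightarrow> nat \<Rightarrow> nat \<Rightarrow> nat \<Rightarrow> 'a" where
  "blk \<zeta> c M u j s x = M (u * \<zeta> + s) (j * c + x)"

definition vstack :: "nat \<Rightarrow> (nat \<Rightarrow> nat \<Rightarrow> 'a) \<Rightarrow> (nat \<Rightarrow> nat \<Rightarrow> 'a) \<Rightarrow> nat \<Rightarrow> nat \<Rightarrow> 'a" where
  "vstack \<zeta> X Y s x = (if s < \<zeta> then X s x else Y (s - \<zeta>) x)"

definition encA :: "nat \<Rightarrow> nat \<Rightarrow> nat \<Rightarrow> nat \<Rightarrow> nat \<Rightarrow> nat \<Rightarrow> (nat \<Rightarrow> nat \<Rightarrow> real) \<Rightarrow> nat \<Rightarrow> nat \<Rightarrow> real" where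
  "encA q p kA t r k A =
    (let \<zeta> = t div (2 * p); c = r div kA; \<theta> = 2 * pi / real q in
     (\<lambda>s x. \<Sum>i<p. \<Sum>j<kA.
        mmul (2 * \<zeta>)
          (kron \<zeta> \<zeta> (mipow 2 (rot (- \<theta>)) (int k * ((int j - 1) * int p + int i + 1))) (mid \<zeta>))
          (vstack \<zeta> (blk \<zeta> c A (bidx i 0) j) (blk \<zeta> c A (bidx i 1) j)) s x))"

definition encB :: "nat \<Rightarrow> nat \<Rightarrow> nat \<Rightarrow> nat \<Rightarrow> nat \<Rightarrow> nat \<Rightarrow> nat \<Rightarrow> (nat \<Rightarrow> nat \<Rightarrow> real) \<Rightarrow> nat \<Rightarrow> nat \<Rightarrow> real" where
  "encB q p kA kB t w k B =
    (let \<zeta> = t div (2 * p); c = w div kB; \<theta> = 2 * pi / real q in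
     (\<lambda>s x. \<Sum>i<p. \<Sum>j<kB.
        mmul (2 * \<zeta>)
          (kron \<zeta> \<zeta> (mipow 2 (rot \<theta>) (int k * (int p - 1 - int i + int j * int p * int kA))) (mid \<zeta>))
          (vstack \<zeta> (blk \<zeta> c B (bidx i 0) j) (blk \<zeta> c B (bidx i 1) j)) s x))"

definition worker_out :: "nat \<Rightarrow> nat \<Rightarrow> nat \<Rightarrow> nat \<Rightarrow> nat \<Rightarrow> nat \<Rightarrow> nat \<Rightarrow> (nat \<Rightarrow> nat \<Rightarrow> real) \<Rightarrow> (nat \<Rightarrow> nat \<Rightarrow> real) \<Rightarrow> nat \<Rightarrow> nat \<Rightarrow> nat \<Rightarrow> real" where
  "worker_out q p kA kB t r w A B k =
     mmul (2 * (t div (2 * p))) (mtrans (encA q p kA t r k A)) (encB q p kA kB t w k B)"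

text \<open>Recovery matrix G^vand_I (tau x tau, tau = 2 p kA kB - 1); row a corresponds to
  e = a - (p kA kB - 1), column b to worker i b; entry omega_q^(e * i_b).\<close>
definition Gvand :: "nat \<Rightarrow> nat \<Rightarrow> nat \<Rightarrow> nat \<Rightarrow> (nat \<Rightarrow> nat) \<Rightarrow> nat \<Rightarrow> nat \<Rightarrow> complex" where
  "Gvand q p kA kB i a b =
     (if a < 2 * p * kA * kB - 1 \<and> b < 2 * p * kA * kB - 1 then
        cis (2 * pi / real q) powi ((int a - (int (p * kA * kB) - 1)) * int (i b)) else 0)"

definition sigma_max :: "nat \<Rightarrow> (nat \<Rightarrow> nat \<Rightarrow> complex) \<Rightarrow> real" where
  "sigma_max n M =
     (let H = mmul n (\<lambda>a b. cnj (M b a)) M in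
      sqrt (Max {Re ev | ev. \<exists>v. (\<exists>b<n. v b \<noteq> 0) \<and> (\<forall>a<n. (\<Sum>b<n. H a b * v b) = ev * v a)}))"

definition cond_num :: "nat \<Rightarrow> (nat \<Rightarrow> nat \<Rightarrow> complex) \<Rightarrow> real" where
  "cond_num n M = sigma_max n M * sigma_max n (minv n M)"

end

theory Submission
  imports Defs "HOL-Computational_Algebra.Polynomial" "Jordan_Normal_Form.Char_Poly"
begin

lemma sin_lb: fixes x :: real assumes "0 \<le> x" "x \<le> 2" shows "x / 3 \<le> sin x"
proof -
  have "\<bar>sin x - (\<Sum>m<3. sin_coeff m * x ^ m)\<bar> \<le> inverse (fact 3) * \<bar>x\<bar> ^ 3"
    by (rule Maclaurin_sin_bound)
  moreover have "(\<Sum>m<3. sin_coeff m * x ^ m) = x"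
    by (simp add: numeral_3_eq_3 sin_coeff_def)
  moreover have "fact 3 = (6::real)" by (simp add: numeral_3_eq_3)
  ultimately have "x - x^3/6 \<le> sin x" using assms by (simp add: abs_if split: if_splits) 
  moreover have "x^3/6 \<le> 2*x/3"
  proof -
    have "x^3 = x * x * x" by (simp add: power3_eq_cube)
    also have "\<dots> \<le> x * 2 * 2" using assms by (intro mult_mono) auto
    finally show ?thesis by simp
  qed
  ultimately show ?thesis by simp
qed

lemma vand_zero:
  fixes z c :: "nat \<Rightarrow> complex"
  assumes inj: "inj_on z {..<N}" and h: "\<forall>b<N. (\<Sum>n<N. c n * z b ^ n) = 0"
  shows "\<forall>n<N. c n = 0"
proof (cases "N = 0")
  case True then show ?thesis by simp
next
  case False
  define p where "p = (\<Sum>n<N. monom (c n) n)"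
  have cp: "coeff p k = (if k < N then c k else 0)" for k
    unfolding p_def by (simp add: coeff_sum coeff_monom)
  have dp: "degree p < N"
  proof -
    have "degree p \<le> N - 1" by (rule degree_le) (use False cp in auto)
    then show ?thesis using False by simp
  qed
  have pp: "poly p x = (\<Sum>n<N. c n * x ^ n)" for x
    unfolding p_def by (simp add: poly_sum poly_monom)
  have "p = 0"
  proof (rule poly_eqI_degree[of "z ` {..<N}"])
    show "\<And>x. x \<in> z ` {..<N} \<Longrightarrow> poly p x = poly 0 x" using h pp by auto
    show "degree p < card (z ` {..<N})" using card_image[OF inj] dp by simp
    show "degree (0::complex poly) < card (z ` {..<N})" using card_image[OF inj] False by simp
  qed
  then show ?thesis using cp by (metis coeff_0)
qed


lemma mmul_assoc: "mmul n (mmul n M N) K a b = mmul n M (mmul n N K) a b"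
proof -
  have "mmul n (mmul n M N) K a b = (\<Sum>c<n. \<Sum>d<n. M a d * N d c * K c b)"
    unfolding mmul_def by (simp add: sum_distrib_right)
  also have "\<dots> = (\<Sum>d<n. \<Sum>c<n. M a d * N d c * K c b)" by (rule sum.swap)
  also have "\<dots> = mmul n M (mmul n N K) a b"
    unfolding mmul_def by (simp add: sum_distrib_left mult.assoc)
  finally show ?thesis .
qed

lemma if01_mult: "(if P then 1 else 0) * (x::'a::comm_semiring_1) = (if P then x else 0)"
  "x * (if P then 1 else 0) = (if P then x else 0)" by auto

lemma mmul_mid_left: "a < n \<Longrightarrow> mmul n (mid n) M a b = M a b"
  unfolding mmul_def mid_def by (simp add: if01_mult sum.delta)

lemma mmul_mid_right: "b < n \<Longrightarrow> mmul n M (mid n) a b = M a b"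
  unfolding mmul_def mid_def by (simp add: if01_mult sum.delta')

lemma minv_unique:
  fixes M N :: "nat \<Rightarrow> nat \<Rightarrow> 'a::comm_semiring_1"
  assumes z: "\<forall>a b. (n \<le> a \<or> n \<le> b) \<longrightarrow> N a b = 0"
    and l: "\<forall>a<n. \<forall>b<n. mmul n N M a b = mid n a b"
    and r: "\<forall>a<n. \<forall>b<n. mmul n M N a b = mid n a b"
  shows "minv n M = N"
  unfolding minv_def
proof (rule the_equality)
  show "(\<forall>a b. (n \<le> a \<or> n \<le> b) \<longrightarrow> N a b = 0) \<and> (\<forall>a<n. \<forall>b<n. mmul n N M a b = mid n a b \<and> mmul n M N a b = mid n a b)"
    using z l r by blast
next
  fix N' assume h: "(\<forall>a b. (n \<le> a \<or> n \<le> b) \<longrightarrow> N' a b = (0::'a)) \<and> (\<forall>a<n. \<forall>b<n. mmul n N' M a b = mid n a b \<and> mmul n M N' a b = mid n a b)"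
  show "N' = N"
  proof (intro ext)
    fix a b
    show "N' a b = N a b"
    proof (cases "a < n \<and> b < n")
      case True
      have "N' a b = mmul n N' (mid n) a b" using True by (simp add: mmul_mid_right)
      also have "\<dots> = mmul n N' (mmul n M N) a b"
        unfolding mmul_def[of n N'] using r True by (intro sum.cong) auto
      also have "\<dots> = mmul n (mmul n N' M) N a b" by (simp add: mmul_assoc)
      also have "\<dots> = mmul n (mid n) N a b"
        unfolding mmul_def[of n _ N] using h True by (intro sum.cong) auto
      also have "\<dots> = N a b" using True by (simp add: mmul_mid_left)
      finally show ?thesis .
    next
      case False then show ?thesis using h z by auto
    qed
  qed
qed

lemma mmul2: "mmul 2 M N a b = M a 0 * N 0 b + M a 1 * N 1 b"
  by (simp add: mmul_def numeral_2_eq_2)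

lemma rot_mul: "mmul 2 (rot x) (rot y) = rot (x + y)"
proof (intro ext)
  fix a b
  show "mmul 2 (rot x) (rot y) a b = rot (x + y) a b"
    unfolding mmul2
    by (cases "a=0"; cases "a=1"; cases "b=0"; cases "b=1") (simp_all add: rot_def cos_add sin_add)
qed

lemma rot_zero: "rot 0 = mid 2"
  by (intro ext) (auto simp: rot_def mid_def)

lemma mpow_rot: "mpow 2 (rot x) m = rot (real m * x)"
  by (induction m) (simp_all add: rot_zero rot_mul distrib_right)

lemma minv_rot: "minv 2 (rot x) = rot (- x)"
  by (rule minv_unique) (simp_all add: rot_mul rot_zero, simp add: rot_def)

lemma mipow_rot: "mipow 2 (rot x) m = rot (of_int m * x)"
  unfolding mipow_def by (auto simp: mpow_rot minv_rot)


lemma cmod_cis_1: "cmod (cis x - 1) = 2 * \<bar>sin (x/2)\<bar>"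
proof -
  have "(cmod (cis x - 1))^2 = (cos x - 1)^2 + (sin x)^2" by (simp add: cmod_power2)
  also have "\<dots> = 2 - 2 * cos x" by (simp add: power2_eq_square algebra_simps sin_squared_eq)
  also have "cos x = 1 - 2 * sin (x/2) ^ 2" using cos_double_sin[of "x/2"] by simp
  finally have e: "(cmod (cis x - 1))^2 = (2 * \<bar>sin (x/2)\<bar>)^2"
    by (simp add: power2_eq_square)
  show ?thesis by (rule power2_eq_imp_eq[OF e]) simp_all
qed

lemma pi_ge3: "3 \<le> pi"
  using sin_x_le_x[of "pi/6"] sin_30 by simp

lemma chord:
  assumes q: "0 < q" and nd: "\<not> int q dvd m"
  shows "2 / real q \<le> cmod (cis (2*pi*of_int m / real q) - 1)"
proof -
  define r where "r = m mod int q"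
  define k where "k = m div int q"
  have m: "m = int q * k + r" unfolding r_def k_def by simp
  have r0: "0 < r" using nd q unfolding r_def
    by (metis dvd_eq_mod_eq_0 int_ops(1) less_le of_nat_less_iff pos_mod_sign)
  have rq: "r < int q" using q unfolding r_def by simp
  have "2*pi*of_int m / real q / 2 = pi * of_int r / real q + pi * of_int k"
    using q by (simp add: m field_simps)
  then have "\<bar>sin (2*pi*of_int m / real q / 2)\<bar> = \<bar>sin (pi * of_int r / real q)\<bar>"
    by (simp add: sin_add abs_mult)
  moreover have "sin (pi / real q) \<le> sin (pi * of_int r / real q)"
  proof (cases "of_int r / real q \<le> 1/2")
    case True
    show ?thesis
      using r0 q True
      by (intro sin_monotone_2pi_le) (auto simp: field_simps intro: order_trans[of _ 0])
  next
    case False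
    then have seq: "sin(pi * of_int r / real q) = sin(pi * (real q - of_int r) / real q)"
      using q by (simp add: algebra_simps diff_divide_distrib)
    have "1 \<le> real q - of_int r" using rq by linarith
    then have h1: "pi * (1 + of_int r) \<le> pi * real q" by (intro mult_left_mono) auto
    have h2: "0 \<le> pi * real q" by simp
    have h3: "- (pi * real q) \<le> pi * 2" using h2 pi_gt_zero by linarith
    show ?thesis
      unfolding seq using False q h1 h3
      by (intro sin_monotone_2pi_le) (auto simp: field_simps)
  qed
  moreover have "1 / real q \<le> sin (pi / real q)"
  proof -
    have "pi / real q \<le> 2"
    proof -
      have "real q \<ge> 2" using r0 rq by linarith
      then have "pi / real q \<le> pi / 2" by (intro divide_left_mono) auto
      then show ?thesis using pi_less_4 by linarith
    qed
    then have "(pi / real q) / 3 \<le> sin (pi / real q)" using q by (intro sin_lb) auto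
    moreover have "1 / real q \<le> (pi / real q) / 3" using q pi_ge3 by (simp add: field_simps)
    ultimately show ?thesis by linarith
  qed
  ultimately have "1 / real q \<le> \<bar>sin (2*pi*of_int m / real q / 2)\<bar>" by linarith
  then show ?thesis unfolding cmod_cis_1 by simp
qed


lemma eig_fin_ne:
  fixes H :: "nat \<Rightarrow> nat \<Rightarrow> complex"
  assumes n: "0 < n"
  shows "finite {ev. \<exists>v. (\<exists>b<n. v b \<noteq> 0) \<and> (\<forall>a<n. (\<Sum>b<n. H a b * v b) = ev * v a)} \<and>
         {ev. \<exists>v. (\<exists>b<n. v b \<noteq> 0) \<and> (\<forall>a<n. (\<Sum>b<n. H a b * v b) = ev * v a)} \<noteq> {}"
    (is "finite ?E \<and> ?E \<noteq> {}")
proof -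
  define Hm where "Hm = mat n n (\<lambda>(a,b). H a b)"
  have Hc: "Hm \<in> carrier_mat n n" unfolding Hm_def by simp
  have mv: "(Hm *\<^sub>v w) $ a = (\<Sum>b<n. H a b * w $ b)" if "a < n" "w \<in> carrier_vec n" for w a
    using that unfolding Hm_def
    by (simp add: scalar_prod_def lessThan_atLeast0)
  have sub: "?E \<subseteq> {x. poly (char_poly Hm) x = 0}"
  proof
    fix ev assume "ev \<in> ?E"
    then obtain v where v1: "\<exists>b<n. v b \<noteq> 0" and v2: "\<forall>a<n. (\<Sum>b<n. H a b * v b) = ev * v a" by auto
    have "eigenvector Hm (vec n v) ev"
      unfolding eigenvector_def
    proof (intro conjI)
      show "vec n v \<in> carrier_vec (dim_row Hm)" using Hc by simp
      show "vec n v \<noteq> 0\<^sub>v (dim_row Hm)"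
      proof
        assume "vec n v = 0\<^sub>v (dim_row Hm)"
        then have "\<forall>b<n. vec n v $ b = 0\<^sub>v n $ b" using Hc by simp
        then show False using v1 by auto
      qed
      show "Hm *\<^sub>v vec n v = ev \<cdot>\<^sub>v vec n v"
        by (rule eq_vecI) (use Hc v2 mv in auto)
    qed
    then have "eigenvalue Hm ev" unfolding eigenvalue_def by blast
    then show "ev \<in> {x. poly (char_poly Hm) x = 0}" using eigenvalue_root_char_poly[OF Hc] by simp
  qed
  have dm: "degree (char_poly Hm) = n \<and> coeff (char_poly Hm) n = 1" by (rule degree_monic_char_poly[OF Hc])
  then have "char_poly Hm \<noteq> 0" by auto
  then have fin: "finite ?E" using sub poly_roots_finite finite_subset by blast
  have "\<not> constant (poly (char_poly Hm))" using dm n constant_degree[of "char_poly Hm"] by simp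
  then obtain z where "poly (char_poly Hm) z = 0" using fundamental_theorem_of_algebra by blast
  then have "eigenvalue Hm z" using eigenvalue_root_char_poly[OF Hc] by simp
  then obtain w where w: "eigenvector Hm w z" unfolding eigenvalue_def by blast
  have wc: "w \<in> carrier_vec n" and wn: "w \<noteq> 0\<^sub>v n" and we: "Hm *\<^sub>v w = z \<cdot>\<^sub>v w"
    using w Hc unfolding eigenvector_def by auto
  have "\<exists>b<n. w $ b \<noteq> 0"
  proof (rule ccontr)
    assume "\<not> ?thesis"
    then have "w = 0\<^sub>v n" using wc by (intro eq_vecI) auto
    then show False using wn by simp
  qed
  moreover have "\<forall>a<n. (\<Sum>b<n. H a b * w $ b) = z * w $ a"
  proof (intro allI impI)
    fix a assume a: "a < n"
    have "(Hm *\<^sub>v w) $ a = (z \<cdot>\<^sub>v w) $ a" using we by simp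
    then show "(\<Sum>b<n. H a b * w $ b) = z * w $ a" using mv[OF a wc] a wc by simp
  qed
  ultimately have "z \<in> ?E" by blast
  then show ?thesis using fin by blast
qed


lemma sq_sum_le: fixes x :: "nat \<Rightarrow> real" shows "(\<Sum>b<n. x b)^2 \<le> real n * (\<Sum>b<n. (x b)^2)"
proof -
  have "(\<Sum>b<n. x b)^2 = (\<Sum>b<n. \<Sum>c<n. x b * x c)"
    by (simp add: power2_eq_square sum_product)
  also have "\<dots> \<le> (\<Sum>b<n. \<Sum>c<n. ((x b)^2 + (x c)^2) / 2)"
  proof (intro sum_mono)
    fix b c
    have "0 \<le> (x b - x c)^2" by simp
    then show "x b * x c \<le> ((x b)^2 + (x c)^2) / 2" by (simp add: power2_eq_square algebra_simps)
  qed
  also have "\<dots> = (\<Sum>b<n. \<Sum>c<n. (x b)^2 / 2) + (\<Sum>b<n. \<Sum>c<n. (x c)^2 / 2)"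
    by (simp add: add_divide_distrib sum.distrib)
  also have "\<dots> = real n * (\<Sum>b<n. (x b)^2)"
    by (simp add: sum_divide_distrib[symmetric] sum_distrib_left[symmetric])
  finally show ?thesis .
qed

lemma quad_id:
  fixes M v :: "_"
  shows "(\<Sum>a<n. cnj (v a) * (\<Sum>b<n. mmul n (\<lambda>a b. cnj (M b a)) M a b * v b)) =
         (\<Sum>c<n. cnj (\<Sum>b<n. M c b * v b) * (\<Sum>b<n. M c b * v b))"
proof -
  have "(\<Sum>a<n. cnj (v a) * (\<Sum>b<n. mmul n (\<lambda>a b. cnj (M b a)) M a b * v b)) =
        (\<Sum>a<n. \<Sum>b<n. \<Sum>c<n. cnj (v a) * cnj (M c a) * M c b * v b)"
    unfolding mmul_def by (simp add: sum_distrib_left sum_distrib_right mult.assoc)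
  also have "\<dots> = (\<Sum>a<n. \<Sum>c<n. \<Sum>b<n. cnj (v a) * cnj (M c a) * M c b * v b)"
    by (rule sum.cong[OF refl], rule sum.swap)
  also have "\<dots> = (\<Sum>c<n. \<Sum>a<n. \<Sum>b<n. cnj (v a) * cnj (M c a) * M c b * v b)"
    by (rule sum.swap)
  also have "\<dots> = (\<Sum>c<n. \<Sum>a<n. \<Sum>b<n. cnj (M c a * v a) * (M c b * v b))"
    by (simp add: mult_ac)
  also have "\<dots> = (\<Sum>c<n. cnj (\<Sum>b<n. M c b * v b) * (\<Sum>b<n. M c b * v b))"
    by (simp only: cnj_sum sum_product)
  finally show ?thesis .
qed

lemma cnj_mult_self: "cnj z * z = (of_real (cmod z))^2"
  by (metis complex_norm_square of_real_power mult.commute)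

lemma sigma_bound:
  fixes M :: "nat \<Rightarrow> nat \<Rightarrow> complex"
  assumes n: "0 < n" and B: "\<forall>a<n. \<forall>b<n. cmod (M a b) \<le> B"
  shows "0 \<le> sigma_max n M \<and> sigma_max n M \<le> real n * B"
proof -
  define H where "H = mmul n (\<lambda>a b. cnj (M b a)) M"
  define E where "E = {ev. \<exists>v. (\<exists>b<n. v b \<noteq> 0) \<and> (\<forall>a<n. (\<Sum>b<n. H a b * v b) = ev * v a)}"
  have fe: "finite E \<and> E \<noteq> {}" unfolding E_def by (rule eig_fin_ne[OF n])
  have B0: "0 \<le> B" using B n by (meson norm_ge_zero order_trans)
  have bnd: "0 \<le> Re ev \<and> Re ev \<le> (real n * B)^2" if "ev \<in> E" for ev
  proof -
    from that obtain v where v1: "\<exists>b<n. v b \<noteq> 0" and v2: "\<forall>a<n. (\<Sum>b<n. H a b * v b) = ev * v a"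
      unfolding E_def by auto
    define N where "N = (\<Sum>a<n. (cmod (v a))^2)"
    define w where "w c = (\<Sum>b<n. M c b * v b)" for c
    define Q where "Q = (\<Sum>c<n. (cmod (w c))^2)"
    have Npos: "0 < N"
    proof -
      obtain b where "b < n" "v b \<noteq> 0" using v1 by auto
      then have "0 < (cmod (v b))^2" by simp
      also have "\<dots> \<le> N" unfolding N_def using \<open>b < n\<close>
        by (intro member_le_sum) auto
      finally show ?thesis .
    qed
    have "(\<Sum>a<n. cnj (v a) * (\<Sum>b<n. H a b * v b)) = (\<Sum>a<n. ev * (cnj (v a) * v a))"
      using v2 by (intro sum.cong) (auto simp: mult.commute mult.left_commute)
    also have "\<dots> = ev * of_real N"
      unfolding N_def by (simp add: sum_distrib_left cnj_mult_self)
    finally have e1: "(\<Sum>a<n. cnj (v a) * (\<Sum>b<n. H a b * v b)) = ev * of_real N" .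
    have "(\<Sum>a<n. cnj (v a) * (\<Sum>b<n. H a b * v b)) = (\<Sum>c<n. cnj (w c) * w c)"
      unfolding H_def w_def by (rule quad_id)
    also have "\<dots> = of_real Q" unfolding Q_def by (simp add: cnj_mult_self)
    finally have "ev * of_real N = of_real Q" using e1 by simp
    then have evq: "ev = of_real (Q / N)" using Npos by (simp add: field_simps)
    have Q0: "0 \<le> Q" unfolding Q_def by (simp add: sum_nonneg)
    have wb: "(cmod (w c))^2 \<le> B^2 * (real n * N)" if "c < n" for c
    proof -
      have "cmod (w c) \<le> (\<Sum>b<n. cmod (M c b * v b))" unfolding w_def by (rule norm_sum)
      also have "\<dots> \<le> (\<Sum>b<n. B * cmod (v b))"
        using B that by (intro sum_mono) (simp add: norm_mult mult_right_mono)
      finally have "cmod (w c) \<le> B * (\<Sum>b<n. cmod (v b))" by (simp add: sum_distrib_left)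
      then have "(cmod (w c))^2 \<le> (B * (\<Sum>b<n. cmod (v b)))^2"
        by (intro power_mono) auto
      also have "\<dots> = B^2 * (\<Sum>b<n. cmod (v b))^2" by (simp add: power_mult_distrib)
      also have "\<dots> \<le> B^2 * (real n * N)"
        unfolding N_def by (intro mult_left_mono sq_sum_le) auto
      finally show ?thesis .
    qed
    have "Q \<le> (\<Sum>c<n. B^2 * (real n * N))" unfolding Q_def by (intro sum_mono wb) auto
    also have "\<dots> = (real n * B)^2 * N" by (simp add: power_mult_distrib power2_eq_square)
    finally have "Q / N \<le> (real n * B)^2" using Npos by (simp add: divide_le_eq)
    then show ?thesis using evq Q0 Npos by simp
  qed
  have set_eq: "{Re ev | ev. \<exists>v. (\<exists>b<n. v b \<noteq> 0) \<and> (\<forall>a<n. (\<Sum>b<n. H a b * v b) = ev * v a)} = Re ` E"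
    unfolding E_def by auto
  have sm: "sigma_max n M = sqrt (Max (Re ` E))"
    unfolding sigma_max_def Let_def H_def[symmetric] set_eq ..
  have f2: "finite (Re ` E)" "Re ` E \<noteq> {}" using fe by auto
  have m1: "Max (Re ` E) \<le> (real n * B)^2" using f2 bnd by (auto simp: Max_le_iff)
  obtain e0 where "e0 \<in> E" using fe by auto
  then have m0: "0 \<le> Max (Re ` E)" using f2 bnd by (meson Max_ge imageI order_trans)
  show ?thesis unfolding sm using m0 m1 B0 n
    by (metis real_sqrt_ge_zero real_sqrt_le_mono real_sqrt_abs abs_of_nonneg mult_nonneg_nonneg of_nat_0_le_iff)
qed


lemma coeff_prod_lin_bound:
  fixes a :: "nat \<Rightarrow> complex"
  assumes "finite C" "\<forall>c\<in>C. cmod (a c) \<le> 1"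
  shows "cmod (coeff (\<Prod>c\<in>C. [:- a c, 1:]) k) \<le> 2 ^ card C"
  using assms
proof (induction C arbitrary: k rule: finite_induct)
  case empty
  then show ?case by (cases k) auto
next
  case (insert x F)
  have IH: "\<And>k. cmod (coeff (\<Prod>c\<in>F. [:- a c, 1:]) k) \<le> 2 ^ card F" using insert by auto
  have ax: "cmod (a x) \<le> 1" using insert by auto
  define p where "p = (\<Prod>c\<in>F. [:- a c, 1:])"
  have "(\<Prod>c\<in>insert x F. [:- a c, 1:]) = Polynomial.smult (- a x) p + pCons 0 p"
    using insert unfolding p_def by simp
  then have "coeff (\<Prod>c\<in>insert x F. [:- a c, 1:]) k = - a x * coeff p k + (if k = 0 then 0 else coeff p (k - 1))"
    by (simp add: coeff_pCons')
  then have "cmod (coeff (\<Prod>c\<in>insert x F. [:- a c, 1:]) k) \<le> cmod (a x) * cmod (coeff p k) + cmod (if k = 0 then 0 else coeff p (k - 1))"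
    by (metis norm_triangle_ineq norm_mult norm_minus_cancel)
  also have "\<dots> \<le> 1 * 2 ^ card F + 2 ^ card F"
    using IH ax unfolding p_def
    by (intro add_mono mult_mono) auto
  finally show ?case using insert by simp
qed

lemma degree_prod_lin:
  fixes a :: "nat \<Rightarrow> complex"
  assumes "finite C"
  shows "degree (\<Prod>c\<in>C. [:- a c, 1:]) \<le> card C"
proof -
  have "degree (\<Prod>c\<in>C. [:- a c, 1:]) \<le> sum (degree \<circ> (\<lambda>c. [:- a c, 1:])) C"
    by (rule degree_prod_sum_le[OF assms])
  also have "\<dots> = card C" by simp
  finally show ?thesis .
qed

lemma poly_as_sum:
  fixes p :: "complex poly"
  assumes "degree p < d"
  shows "poly p x = (\<Sum>j<d. coeff p j * x ^ j)"
proof -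
  have "poly p x = (\<Sum>j\<le>degree p. coeff p j * x ^ j)" by (rule poly_altdef)
  also have "\<dots> = (\<Sum>j<d. coeff p j * x ^ j)"
    using assms by (intro sum.mono_neutral_left) (auto simp: coeff_eq_0)
  finally show ?thesis .
qed

lemma vand_inv:
  fixes z :: "nat \<Rightarrow> complex" and \<delta> :: real
  assumes inj: "inj_on z {..<d}" and unit: "\<forall>j<d. cmod (z j) = 1"
    and dpos: "0 < \<delta>"
    and sep: "\<forall>j<d. \<forall>j'<d. j \<noteq> j' \<longrightarrow> \<delta> \<le> cmod (z j - z j')"
  shows "\<exists>Vi. (\<forall>b<d. \<forall>c<d. (\<Sum>j<d. Vi b j * z c ^ j) = (if b = c then 1 else 0)) \<and>
              (\<forall>j<d. \<forall>j'<d. (\<Sum>b<d. z b ^ j * Vi b j') = (if j = j' then 1 else 0)) \<and>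
              (\<forall>b<d. \<forall>j<d. cmod (Vi b j) \<le> 2 ^ (d - 1) / \<delta> ^ (d - 1))"
proof -
  define P where "P b = (\<Prod>c\<in>{..<d} - {b}. [:- z c, 1:])" for b
  define den where "den b = (\<Prod>c\<in>{..<d} - {b}. (z b - z c))" for b
  define L where "L b = Polynomial.smult (1 / den b) (P b)" for b
  define Vi where "Vi b j = coeff (L b) j" for b j
  have card: "card ({..<d} - {b}) = d - 1" if "b < d" for b using that by simp
  have denz: "den b \<noteq> 0" if "b < d" for b
    unfolding den_def using that inj by (auto simp: inj_on_def)
  have degL: "degree (L b) < d" if "b < d" for b
  proof -
    have "degree (L b) \<le> degree (P b)" unfolding L_def by simp
    also have "\<dots> \<le> d - 1" unfolding P_def using card[OF that] degree_prod_lin[of "{..<d} - {b}" z] by simp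
    finally show ?thesis using that by linarith
  qed
  have polyL: "poly (L b) (z c) = (if b = c then 1 else 0)" if "b < d" "c < d" for b c
  proof (cases "b = c")
    case True
    have "poly (P b) (z b) = den b" unfolding P_def den_def poly_prod by (intro prod.cong) auto
    then show ?thesis unfolding L_def using denz[OF that(1)] True by simp
  next
    case False
    have "poly (P b) (z c) = 0" unfolding P_def poly_prod using False that
      by (intro prod_zero) auto
    then show ?thesis unfolding L_def using False by simp
  qed
  have left: "\<forall>b<d. \<forall>c<d. (\<Sum>j<d. Vi b j * z c ^ j) = (if b = c then 1 else 0)"
    using polyL poly_as_sum[OF degL] unfolding Vi_def by auto
  have right: "\<forall>j<d. \<forall>j'<d. (\<Sum>b<d. z b ^ j * Vi b j') = (if j = j' then 1 else 0)"
  proof (intro allI impI)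
    fix j j' assume j: "j < d" and j': "j' < d"
    define Q where "Q = (\<Sum>b<d. Polynomial.smult (z b ^ j) (L b)) - monom 1 j"
    have dQ: "degree Q < d"
    proof -
      have "degree (\<Sum>b<d. Polynomial.smult (z b ^ j) (L b)) < d"
      proof (rule degree_lessI)
        show "(\<Sum>b<d. Polynomial.smult (z b ^ j) (L b)) \<noteq> 0 \<or> 0 < d" using j by auto
        show "\<forall>k\<ge>d. coeff (\<Sum>b<d. Polynomial.smult (z b ^ j) (L b)) k = 0"
        proof (intro allI impI)
        fix k assume dk: "d \<le> k"
        have ck: "coeff (L b) k = 0" if bd: "b < d" for b
          using degL[OF bd] dk by (intro coeff_eq_0) linarith
        from ck show "coeff (\<Sum>b<d. Polynomial.smult (z b ^ j) (L b)) k = 0"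
          by (simp add: coeff_sum)
        qed
      qed
      moreover have "degree (monom (1::complex) j) < d" using j by (simp add: degree_monom_eq)
      ultimately show ?thesis unfolding Q_def
        by (meson degree_diff_le_max max.strict_boundedE max_less_iff_conj le_less_trans)
    qed
    have "poly Q x = 0" if "x \<in> z ` {..<d}" for x
    proof -
      obtain c where c: "c < d" "x = z c" using \<open>x \<in> z ` {..<d}\<close> by auto
      have "poly Q x = (\<Sum>b<d. z b ^ j * (if b = c then 1 else 0)) - z c ^ j"
        unfolding Q_def using c polyL by (simp add: poly_sum poly_monom)
      also have "\<dots> = 0" using c by (simp add: if_distrib sum.delta cong: if_cong)
      finally show ?thesis .
    qed
    then have "Q = 0"
      using poly_eqI_degree[of "z ` {..<d}" Q 0] dQ card_image[OF inj] j by auto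
    then have "coeff Q j' = 0" by simp
    then show "(\<Sum>b<d. z b ^ j * Vi b j') = (if j = j' then 1 else 0)"
      unfolding Q_def Vi_def by (simp add: coeff_sum coeff_monom)
  qed
  have bound: "\<forall>b<d. \<forall>j<d. cmod (Vi b j) \<le> 2 ^ (d - 1) / \<delta> ^ (d - 1)"
  proof (intro allI impI)
    fix b j assume b: "b < d" and j: "j < d"
    have c1: "cmod (coeff (P b) j) \<le> 2 ^ (d - 1)"
      unfolding P_def using coeff_prod_lin_bound[of "{..<d} - {b}" z j] unit card[OF b] by auto
    have c2: "\<delta> ^ (d - 1) \<le> cmod (den b)"
    proof -
      have "\<delta> ^ (d - 1) = (\<Prod>c\<in>{..<d} - {b}. \<delta>)" using card[OF b] by simp
      also have "\<dots> \<le> (\<Prod>c\<in>{..<d} - {b}. cmod (z b - z c))"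
        using sep b dpos by (intro prod_mono) auto
      also have "\<dots> = cmod (den b)" unfolding den_def by (simp add: prod_norm)
      finally show ?thesis .
    qed
    have "cmod (Vi b j) = cmod (coeff (P b) j) / cmod (den b)"
      unfolding Vi_def L_def by (simp add: norm_divide)
    also have "\<dots> \<le> 2 ^ (d - 1) / \<delta> ^ (d - 1)"
      using c1 c2 dpos by (intro frac_le) auto
    finally show "cmod (Vi b j) \<le> 2 ^ (d - 1) / \<delta> ^ (d - 1)" .
  qed
  show ?thesis using left right bound by blast
qed


lemma inv_right_abs:
  fixes S X Y T Ti :: "nat \<Rightarrow> nat \<Rightarrow> complex" and q :: complex
  assumes q: "q \<noteq> 0"
    and R1: "(\<Sum>b<\<tau>. S a b * cnj (S a' b)) + (\<Sum>j<d. X a j * cnj (X a' j)) = (if a = a' then q else 0)"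
    and R2: "\<forall>j<d. (\<Sum>b<\<tau>. S a b * cnj (Y j b)) = - (\<Sum>j0<d. X a j0 * cnj (T j j0))"
    and TiL: "\<forall>j'<d. \<forall>j0<d. (\<Sum>j<d. Ti j' j * T j j0) = (if j' = j0 then 1 else 0)"
  shows "(\<Sum>b<\<tau>. S a b * ((1/q) * (cnj (S a' b) - (\<Sum>j<d. \<Sum>j'<d. cnj (Y j b) * cnj (Ti j' j) * cnj (X a' j'))))) = (if a = a' then 1 else 0)"
proof -
  have "(\<Sum>b<\<tau>. \<Sum>j<d. \<Sum>j'<d. S a b * (cnj (Y j b) * cnj (Ti j' j) * cnj (X a' j'))) =
        (\<Sum>j<d. \<Sum>b<\<tau>. \<Sum>j'<d. S a b * (cnj (Y j b) * cnj (Ti j' j) * cnj (X a' j')))"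
    by (rule sum.swap)
  also have "\<dots> = (\<Sum>j<d. \<Sum>j'<d. \<Sum>b<\<tau>. S a b * (cnj (Y j b) * cnj (Ti j' j) * cnj (X a' j')))"
    by (rule sum.cong[OF refl], rule sum.swap)
  also have "\<dots> = (\<Sum>j<d. \<Sum>j'<d. (\<Sum>b<\<tau>. S a b * cnj (Y j b)) * (cnj (Ti j' j) * cnj (X a' j')))"
    by (simp add: sum_distrib_left sum_distrib_right mult_ac)
  also have "\<dots> = (\<Sum>j<d. \<Sum>j'<d. (- (\<Sum>j0<d. X a j0 * cnj (T j j0))) * (cnj (Ti j' j) * cnj (X a' j')))"
    using R2 by simp
  also have "\<dots> = - (\<Sum>j<d. \<Sum>j'<d. \<Sum>j0<d. X a j0 * cnj (X a' j') * cnj (Ti j' j * T j j0))"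
    by (simp add: sum_distrib_left sum_distrib_right sum_negf mult_ac)
  also have "\<dots> = - (\<Sum>j'<d. \<Sum>j<d. \<Sum>j0<d. X a j0 * cnj (X a' j') * cnj (Ti j' j * T j j0))"
    by (rule arg_cong[where f=uminus], rule sum.swap)
  also have "\<dots> = - (\<Sum>j'<d. \<Sum>j0<d. \<Sum>j<d. X a j0 * cnj (X a' j') * cnj (Ti j' j * T j j0))"
    by (rule arg_cong[where f=uminus], rule sum.cong[OF refl], rule sum.swap)
  also have "\<dots> = - (\<Sum>j'<d. \<Sum>j0<d. X a j0 * cnj (X a' j') * cnj (\<Sum>j<d. Ti j' j * T j j0))"
    by (simp add: sum_distrib_left cnj_sum)
  also have "\<dots> = - (\<Sum>j'<d. \<Sum>j0<d. X a j0 * cnj (X a' j') * (if j' = j0 then 1 else 0))"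
    using TiL by (intro arg_cong[where f=uminus] sum.cong refl) auto
  also have "\<dots> = - (\<Sum>j'<d. X a j' * cnj (X a' j'))"
    by (simp add: if_distrib sum.delta' cong: if_cong)
  finally have e: "(\<Sum>b<\<tau>. \<Sum>j<d. \<Sum>j'<d. S a b * (cnj (Y j b) * cnj (Ti j' j) * cnj (X a' j'))) = - (\<Sum>j'<d. X a j' * cnj (X a' j'))" .
  have "(\<Sum>b<\<tau>. S a b * ((1/q) * (cnj (S a' b) - (\<Sum>j<d. \<Sum>j'<d. cnj (Y j b) * cnj (Ti j' j) * cnj (X a' j'))))) =
     (1/q) * ((\<Sum>b<\<tau>. S a b * cnj (S a' b)) - (\<Sum>b<\<tau>. \<Sum>j<d. \<Sum>j'<d. S a b * (cnj (Y j b) * cnj (Ti j' j) * cnj (X a' j'))))"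
    by (simp add: sum_distrib_left right_diff_distrib sum_subtractf mult_ac)
  also have "\<dots> = (1/q) * (if a = a' then q else 0)" unfolding e using R1 by simp
  also have "\<dots> = (if a = a' then 1 else 0)" using q by simp
  finally show ?thesis .
qed

lemma inv_left_abs:
  fixes S X Y T Ti :: "nat \<Rightarrow> nat \<Rightarrow> complex" and q :: complex
  assumes q: "q \<noteq> 0"
    and C1: "(\<Sum>a<\<tau>. cnj (S a b) * S a b') + (\<Sum>j<d. cnj (Y j b) * Y j b') = (if b = b' then q else 0)"
    and C2: "\<forall>j'<d. (\<Sum>a<\<tau>. cnj (X a j') * S a b') = - (\<Sum>j0<d. Y j0 b' * cnj (T j0 j'))"
    and TiR: "\<forall>j0<d. \<forall>j<d. (\<Sum>j'<d. T j0 j' * Ti j' j) = (if j0 = j then 1 else 0)"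
  shows "(\<Sum>a<\<tau>. ((1/q) * (cnj (S a b) - (\<Sum>j<d. \<Sum>j'<d. cnj (Y j b) * cnj (Ti j' j) * cnj (X a j')))) * S a b') = (if b = b' then 1 else 0)"
proof -
  have "(\<Sum>a<\<tau>. \<Sum>j<d. \<Sum>j'<d. cnj (Y j b) * cnj (Ti j' j) * cnj (X a j') * S a b') =
        (\<Sum>j<d. \<Sum>a<\<tau>. \<Sum>j'<d. cnj (Y j b) * cnj (Ti j' j) * cnj (X a j') * S a b')"
    by (rule sum.swap)
  also have "\<dots> = (\<Sum>j<d. \<Sum>j'<d. \<Sum>a<\<tau>. cnj (Y j b) * cnj (Ti j' j) * cnj (X a j') * S a b')"
    by (rule sum.cong[OF refl], rule sum.swap)
  also have "\<dots> = (\<Sum>j<d. \<Sum>j'<d. cnj (Y j b) * cnj (Ti j' j) * (\<Sum>a<\<tau>. cnj (X a j') * S a b'))"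
    by (simp add: sum_distrib_left sum_distrib_right mult_ac)
  also have "\<dots> = (\<Sum>j<d. \<Sum>j'<d. cnj (Y j b) * cnj (Ti j' j) * (- (\<Sum>j0<d. Y j0 b' * cnj (T j0 j'))))"
    using C2 by simp
  also have "\<dots> = - (\<Sum>j<d. \<Sum>j'<d. \<Sum>j0<d. cnj (Y j b) * Y j0 b' * cnj (T j0 j' * Ti j' j))"
    by (simp add: sum_distrib_left sum_distrib_right sum_negf mult_ac)
  also have "\<dots> = - (\<Sum>j<d. \<Sum>j0<d. \<Sum>j'<d. cnj (Y j b) * Y j0 b' * cnj (T j0 j' * Ti j' j))"
    by (rule arg_cong[where f=uminus], rule sum.cong[OF refl], rule sum.swap)
  also have "\<dots> = - (\<Sum>j<d. \<Sum>j0<d. cnj (Y j b) * Y j0 b' * cnj (\<Sum>j'<d. T j0 j' * Ti j' j))"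
    by (simp add: sum_distrib_left cnj_sum)
  also have "\<dots> = - (\<Sum>j<d. \<Sum>j0<d. cnj (Y j b) * Y j0 b' * (if j0 = j then 1 else 0))"
    using TiR by (intro arg_cong[where f=uminus] sum.cong refl) auto
  also have "\<dots> = - (\<Sum>j<d. cnj (Y j b) * Y j b')"
    by (simp add: if_distrib sum.delta' cong: if_cong)
  finally have e: "(\<Sum>a<\<tau>. \<Sum>j<d. \<Sum>j'<d. cnj (Y j b) * cnj (Ti j' j) * cnj (X a j') * S a b') = - (\<Sum>j<d. cnj (Y j b) * Y j b')" .
  have "(\<Sum>a<\<tau>. ((1/q) * (cnj (S a b) - (\<Sum>j<d. \<Sum>j'<d. cnj (Y j b) * cnj (Ti j' j) * cnj (X a j')))) * S a b') =
     (1/q) * ((\<Sum>a<\<tau>. cnj (S a b) * S a b') - (\<Sum>a<\<tau>. \<Sum>j<d. \<Sum>j'<d. cnj (Y j b) * cnj (Ti j' j) * cnj (X a j') * S a b'))"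
    by (simp add: sum_distrib_left sum_distrib_right left_diff_distrib right_diff_distrib sum_subtractf mult_ac)
  also have "\<dots> = (1/q) * (if b = b' then q else 0)" unfolding e using C1 by simp
  also have "\<dots> = (if b = b' then 1 else 0)" using q by simp
  finally show ?thesis .
qed


definition wq :: "nat \<Rightarrow> int \<Rightarrow> complex" where
  "wq q m = cis (2 * pi * of_int m / real q)"

lemma wq_add: "wq q (a + b) = wq q a * wq q b"
  unfolding wq_def by (simp add: cis_mult add_divide_distrib distrib_left)

lemma wq_cnj: "cnj (wq q a) = wq q (- a)"
  unfolding wq_def by (simp add: cis_cnj)

lemma wq_norm [simp]: "cmod (wq q a) = 1"
  unfolding wq_def by simp

lemma wq_diff: "wq q (a - b) = wq q a * cnj (wq q b)"
  using wq_add[of q a "- b"] by (simp add: wq_cnj)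

lemma wq_dvd: assumes "0 < q" "int q dvd a" shows "wq q a = 1"
proof -
  obtain k where "a = int q * k" using assms by (auto elim: dvdE)
  then have "2 * pi * of_int a / real q = 2 * pi * of_int k" using assms by simp
  then show ?thesis unfolding wq_def by simp
qed

lemma wq_pow: "wq q a ^ n = wq q (a * int n)"
  unfolding wq_def by (simp add: DeMoivre mult_ac)

lemma wq_neq1: assumes "0 < q" "\<not> int q dvd a" shows "wq q a \<noteq> 1"
proof
  assume "wq q a = 1"
  then have "cmod (wq q a - 1) = 0" by simp
  moreover have "2 / real q \<le> cmod (wq q a - 1)" unfolding wq_def using chord[OF assms] by simp
  ultimately show False using assms by simp
qed

lemma geo: assumes q: "0 < q"
  shows "(\<Sum>e<q. wq q (m * int e)) = (if int q dvd m then of_nat q else 0)"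
proof (cases "int q dvd m")
  case True
  then have "wq q (m * int e) = 1" for e using q by (intro wq_dvd) auto
  then show ?thesis using True by simp
next
  case False
  have "(\<Sum>e<q. wq q (m * int e)) = (\<Sum>e<q. (wq q m) ^ e)" by (simp add: wq_pow)
  also have "\<dots> = (1 - wq q m ^ q) / (1 - wq q m)"
    using wq_neq1[OF q False] by (simp add: sum_gp_strict)
  also have "wq q m ^ q = 1" using q by (simp add: wq_pow wq_dvd)
  finally show ?thesis using False by simp
qed

lemma split_rows: fixes \<tau> d :: nat shows "(\<Sum>e<\<tau> + d. h e) = (\<Sum>a<\<tau>. h a) + (\<Sum>j<d. h (\<tau> + j))"
  by (induction d) (simp_all add: add.assoc)

lemma split_cols:
  fixes i u :: "nat \<Rightarrow> nat"
  assumes "inj_on i {..<\<tau>}" "inj_on u {..<d}" "i ` {..<\<tau>} \<inter> u ` {..<d} = {}"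
    "i ` {..<\<tau>} \<union> u ` {..<d} = {..<q}"
  shows "(\<Sum>k<q. h k) = (\<Sum>b<\<tau>. h (i b)) + (\<Sum>j<d. h (u j))"
proof -
  have "(\<Sum>k<q. h k) = (\<Sum>k\<in>i ` {..<\<tau>}. h k) + (\<Sum>k\<in>u ` {..<d}. h k)"
    unfolding assms(4)[symmetric] using assms(3) by (intro sum.union_disjoint) auto
  also have "\<dots> = (\<Sum>b<\<tau>. h (i b)) + (\<Sum>j<d. h (u j))"
    using assms(1,2) by (simp add: sum.reindex)
  finally show ?thesis .
qed


lemma part2:
  fixes q \<tau> :: nat and K :: int and i :: "nat \<Rightarrow> nat"
  assumes q: "0 < q" and t0: "0 < \<tau>" and tq: "\<tau> < q" and ib: "\<forall>b<\<tau>. i b < q"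
    and inj: "inj_on i {..<\<tau>}"
  shows "cond_num \<tau> (\<lambda>a b. if a < \<tau> \<and> b < \<tau> then wq q ((int a - K) * int (i b)) else 0)
     \<le> real \<tau> * (real \<tau> * ((1 + real (q - \<tau>) * real (q - \<tau>) * real q ^ (q - \<tau> - 1)) / real q))"
proof -
  define d where "d = q - \<tau>"
  have qd: "q = \<tau> + d" unfolding d_def using tq by simp
  define G where "G = (\<lambda>a b. if a < \<tau> \<and> b < \<tau> then wq q ((int a - K) * int (i b)) else 0)"
  define J where "J = {..<q} - i ` {..<\<tau>}"
  have isub: "i ` {..<\<tau>} \<subseteq> {..<q}" using ib by auto
  have cardJ: "card J = d" unfolding J_def d_def
    using card_Diff_subset[OF finite_imageI[OF finite_lessThan] isub] card_image[OF inj] by simp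
  obtain u where u: "bij_betw u {..<d} J"
    using finite_same_card_bij[of "{..<d}" J] cardJ unfolding J_def by auto
  have uinj: "inj_on u {..<d}" and uim: "u ` {..<d} = J" using u by (auto simp: bij_betw_def)
  have disj: "i ` {..<\<tau>} \<inter> u ` {..<d} = {}" unfolding uim J_def by auto
  have un: "i ` {..<\<tau>} \<union> u ` {..<d} = {..<q}" unfolding uim J_def using isub by auto
  have uq: "u j < q" if "j < d" for j using uim that unfolding J_def by auto
  have uni: "u j \<noteq> i b" if "j < d" "b < \<tau>" for j b using uim that unfolding J_def by auto
  have colsplit: "(\<Sum>k<q. h k) = (\<Sum>b<\<tau>. h (i b)) + (\<Sum>j<d. h (u j))" for h :: "nat \<Rightarrow> complex"
    by (rule split_cols[OF inj uinj disj un])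
  have rowsplit: "(\<Sum>e<q. h e) = (\<Sum>a<\<tau>. h a) + (\<Sum>j<d. h (\<tau> + j))" for h :: "nat \<Rightarrow> complex"
    unfolding qd by (rule split_rows)
  have dvd_eq: "int q dvd (int x - int y) \<longleftrightarrow> x = y" if "x < q" "y < q" for x y
  proof
    assume h: "int q dvd (int x - int y)"
    show "x = y"
    proof (rule ccontr)
      assume "x \<noteq> y"
      then have "\<bar>int q\<bar> \<le> \<bar>int x - int y\<bar>" using h by (intro dvd_imp_le_int) auto
      then show False using that by linarith
    qed
  qed simp
  define F where "F e k = wq q ((int e - K) * int k)" for e k
  have O1: "(\<Sum>k<q. F e k * cnj (F e' k)) = (if e = e' then of_nat q else 0)" if "e < q" "e' < q" for e e'
  proof -
    have "F e k * cnj (F e' k) = wq q ((int e - int e') * int k)" for k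
      unfolding F_def wq_diff[symmetric] by (simp add: algebra_simps)
    then have "(\<Sum>k<q. F e k * cnj (F e' k)) = (\<Sum>k<q. wq q ((int e - int e') * int k))" by simp
    also have "\<dots> = (if e = e' then of_nat q else 0)" using geo[OF q] dvd_eq[OF that] by simp
    finally show ?thesis .
  qed
  have O2: "(\<Sum>e<q. cnj (F e k) * F e k') = (if k = k' then of_nat q else 0)" if "k < q" "k' < q" for k k'
  proof -
    have "cnj (F e k) * F e k' = wq q (- K * (int k' - int k)) * wq q ((int k' - int k) * int e)" for e
      unfolding F_def wq_add[symmetric] by (simp add: wq_diff[symmetric] algebra_simps mult.commute)
    then have "(\<Sum>e<q. cnj (F e k) * F e k') = wq q (- K * (int k' - int k)) * (\<Sum>e<q. wq q ((int k' - int k) * int e))"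
      by (simp add: sum_distrib_left)
    also have "\<dots> = (if k = k' then of_nat q else 0)"
    proof -
      have g: "(\<Sum>e<q. wq q ((int k' - int k) * int e)) = (if k' = k then of_nat q else 0)"
        using geo[OF q, of "int k' - int k"] dvd_eq[OF that(2,1)] by simp
      show ?thesis unfolding g by (auto simp: wq_def)
    qed
    finally show ?thesis .
  qed
  have R1: "(\<Sum>b<\<tau>. F a (i b) * cnj (F a' (i b))) + (\<Sum>j<d. F a (u j) * cnj (F a' (u j)))
      = (if a = a' then of_nat q else 0)" if "a < \<tau>" "a' < \<tau>" for a a'
    using O1[of a a'] that tq colsplit[of "\<lambda>k. F a k * cnj (F a' k)"] by simp
  have R2: "\<forall>j<d. (\<Sum>b<\<tau>. F a (i b) * cnj (F (\<tau> + j) (i b))) = - (\<Sum>j0<d. F a (u j0) * cnj (F (\<tau> + j) (u j0)))"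
    if "a < \<tau>" for a
  proof (intro allI impI)
    fix j assume j: "j < d"
    have "(\<Sum>b<\<tau>. F a (i b) * cnj (F (\<tau> + j) (i b))) + (\<Sum>j0<d. F a (u j0) * cnj (F (\<tau> + j) (u j0))) = 0"
      using O1[of a "\<tau> + j"] that j qd colsplit[of "\<lambda>k. F a k * cnj (F (\<tau> + j) k)"] by simp
    then show "(\<Sum>b<\<tau>. F a (i b) * cnj (F (\<tau> + j) (i b))) = - (\<Sum>j0<d. F a (u j0) * cnj (F (\<tau> + j) (u j0)))"
      by (simp add: eq_neg_iff_add_eq_0)
  qed
  have C1: "(\<Sum>a<\<tau>. cnj (F a (i b)) * F a (i b')) + (\<Sum>j<d. cnj (F (\<tau> + j) (i b)) * F (\<tau> + j) (i b'))
      = (if b = b' then of_nat q else 0)" if "b < \<tau>" "b' < \<tau>" for b b'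
  proof -
    have "(i b = i b') = (b = b')" using inj that by (auto simp: inj_on_def)
    then show ?thesis
      using O2[of "i b" "i b'"] ib that rowsplit[of "\<lambda>e. cnj (F e (i b)) * F e (i b')"] by simp
  qed
  have C2: "\<forall>j'<d. (\<Sum>a<\<tau>. cnj (F a (u j')) * F a (i b')) = - (\<Sum>j0<d. F (\<tau> + j0) (i b') * cnj (F (\<tau> + j0) (u j')))"
    if "b' < \<tau>" for b'
  proof (intro allI impI)
    fix j' assume j': "j' < d"
    have "(\<Sum>a<\<tau>. cnj (F a (u j')) * F a (i b')) + (\<Sum>j0<d. cnj (F (\<tau> + j0) (u j')) * F (\<tau> + j0) (i b')) = 0"
      using O2[of "u j'" "i b'"] uq[OF j'] ib that uni[OF j' that] rowsplit[of "\<lambda>e. cnj (F e (u j')) * F e (i b')"] by simp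
    then show "(\<Sum>a<\<tau>. cnj (F a (u j')) * F a (i b')) = - (\<Sum>j0<d. F (\<tau> + j0) (i b') * cnj (F (\<tau> + j0) (u j')))"
      by (simp add: eq_neg_iff_add_eq_0 mult.commute)
  qed
  define z where "z j = wq q (int (u j))" for j
  have zinj: "inj_on z {..<d}"
  proof (rule inj_onI)
    fix j j' assume "j \<in> {..<d}" "j' \<in> {..<d}" "z j = z j'"
    show "j = j'"
    proof (rule ccontr)
      assume "j \<noteq> j'"
      then have "u j \<noteq> u j'" using uinj \<open>j \<in> _\<close> \<open>j' \<in> _\<close> by (auto simp: inj_on_def)
      then have "\<not> int q dvd (int (u j) - int (u j'))" using dvd_eq uq \<open>j \<in> _\<close> \<open>j' \<in> _\<close> by auto
      then have "wq q (int (u j) - int (u j')) \<noteq> 1" by (rule wq_neq1[OF q])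
      moreover have "wq q (int (u j) - int (u j')) = 1"
      proof -
        have "wq q (int (u j) - int (u j')) = z j * wq q (- int (u j'))"
          unfolding z_def wq_diff wq_cnj ..
        also have "\<dots> = z j' * wq q (- int (u j'))" using \<open>z j = z j'\<close> by simp
        also have "\<dots> = wq q (int (u j') + - int (u j'))" unfolding z_def wq_add ..
        also have "\<dots> = 1" by (simp add: wq_def)
        finally show ?thesis .
      qed
      ultimately show False by simp
    qed
  qed
  have zsep: "\<forall>j<d. \<forall>j'<d. j \<noteq> j' \<longrightarrow> 2 / real q \<le> cmod (z j - z j')"
  proof (intro allI impI)
    fix j j' assume jj: "j < d" "j' < d" "j \<noteq> j'"
    then have "u j \<noteq> u j'" using uinj by (auto simp: inj_on_def)
    then have nd: "\<not> int q dvd (int (u j) - int (u j'))" using dvd_eq uq jj by auto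
    have "z j - z j' = (wq q (int (u j) - int (u j')) - 1) * z j'"
      unfolding z_def using wq_add[of q "int (u j) - int (u j')" "int (u j')"] by (simp add: algebra_simps)
    then have "cmod (z j - z j') = cmod (wq q (int (u j) - int (u j')) - 1)"
      by (simp add: norm_mult z_def)
    then show "2 / real q \<le> cmod (z j - z j')" using chord[OF q nd] unfolding wq_def by simp
  qed
  obtain Vi where ViL: "\<forall>b<d. \<forall>c<d. (\<Sum>j<d. Vi b j * z c ^ j) = (if b = c then 1 else 0)"
    and ViR: "\<forall>j<d. \<forall>j'<d. (\<Sum>b<d. z b ^ j * Vi b j') = (if j = j' then 1 else 0)"
    and ViB: "\<forall>b<d. \<forall>j<d. cmod (Vi b j) \<le> 2 ^ (d - 1) / (2 / real q) ^ (d - 1)"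
    using vand_inv[OF zinj _ _ zsep] q unfolding z_def by auto
  define c where "c j = (int \<tau> - K) * int (u j)" for j
  define Ti where "Ti j' j = wq q (- c j') * Vi j' j" for j' j
  have Tfac: "F (\<tau> + j) (u j') = wq q (c j') * z j' ^ j" for j j'
    unfolding F_def c_def z_def wq_pow wq_add[symmetric] by (simp add: algebra_simps)
  have canc: "wq q (- c j) * wq q (c j) = 1" for j
    unfolding wq_add[symmetric] by (simp add: wq_def)
  have TiL: "\<forall>j'<d. \<forall>j0<d. (\<Sum>j<d. Ti j' j * F (\<tau> + j) (u j0)) = (if j' = j0 then 1 else 0)"
  proof (intro allI impI)
    fix j' j0 assume j: "j' < d" "j0 < d"
    have "(\<Sum>j<d. Ti j' j * F (\<tau> + j) (u j0)) = wq q (- c j') * wq q (c j0) * (\<Sum>j<d. Vi j' j * z j0 ^ j)"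
      unfolding Ti_def Tfac by (simp add: sum_distrib_left mult_ac)
    also have "\<dots> = (if j' = j0 then 1 else 0)" using ViL j canc[of j0] by simp
    finally show "(\<Sum>j<d. Ti j' j * F (\<tau> + j) (u j0)) = (if j' = j0 then 1 else 0)" .
  qed
  have TiR: "\<forall>j0<d. \<forall>j<d. (\<Sum>j'<d. F (\<tau> + j0) (u j') * Ti j' j) = (if j0 = j then 1 else 0)"
  proof (intro allI impI)
    fix j0 j assume j: "j0 < d" "j < d"
    have "F (\<tau> + j0) (u j') * Ti j' j = z j' ^ j0 * Vi j' j" for j'
      unfolding Ti_def Tfac using canc[of j'] by (simp add: mult_ac)
    then have "(\<Sum>j'<d. F (\<tau> + j0) (u j') * Ti j' j) = (\<Sum>j'<d. z j' ^ j0 * Vi j' j)" by simp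
    also have "\<dots> = (if j0 = j then 1 else 0)" using ViR j by simp
    finally show "(\<Sum>j'<d. F (\<tau> + j0) (u j') * Ti j' j) = (if j0 = j then 1 else 0)" .
  qed
  have TiB: "cmod (Ti j' j) \<le> real q ^ (d - 1)" if "j' < d" "j < d" for j' j
  proof -
    have "cmod (Ti j' j) = cmod (Vi j' j)" unfolding Ti_def by (simp add: norm_mult)
    also have "\<dots> \<le> 2 ^ (d - 1) / (2 / real q) ^ (d - 1)" using ViB that by simp
    also have "\<dots> = real q ^ (d - 1)" using q by (simp add: power_divide)
    finally show ?thesis .
  qed
  define N where "N b a = (if b < \<tau> \<and> a < \<tau> then (1 / of_nat q) * (cnj (F a (i b)) -
      (\<Sum>j<d. \<Sum>j'<d. cnj (F (\<tau> + j) (i b)) * cnj (Ti j' j) * cnj (F a (u j'))))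
      else 0)" for b a
  have GF: "G a b = (if a < \<tau> \<and> b < \<tau> then F a (i b) else 0)" for a b
    unfolding G_def F_def ..
  have qne: "(of_nat q :: complex) \<noteq> 0" using q by simp
  have minvG: "minv \<tau> G = N"
  proof (rule minv_unique)
    show "\<forall>a b. (\<tau> \<le> a \<or> \<tau> \<le> b) \<longrightarrow> N a b = 0" unfolding N_def by auto
    show "\<forall>b<\<tau>. \<forall>b'<\<tau>. mmul \<tau> N G b b' = mid \<tau> b b'"
    proof (intro allI impI)
      fix b b' assume b: "b < \<tau>" "b' < \<tau>"
      have "mmul \<tau> N G b b' = (\<Sum>a<\<tau>. ((1 / of_nat q) * (cnj (F a (i b)) -
          (\<Sum>j<d. \<Sum>j'<d. cnj (F (\<tau> + j) (i b)) * cnj (Ti j' j) * cnj (F a (u j'))))) * F a (i b'))"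
        unfolding mmul_def N_def GF using b by (intro sum.cong) auto
      also have "\<dots> = (if b = b' then 1 else 0)"
        by (rule inv_left_abs[OF qne C1[OF b] C2[OF b(2)] TiR])
      finally show "mmul \<tau> N G b b' = mid \<tau> b b'" unfolding mid_def using b by simp
    qed
    show "\<forall>a<\<tau>. \<forall>a'<\<tau>. mmul \<tau> G N a a' = mid \<tau> a a'"
    proof (intro allI impI)
      fix a a' assume a: "a < \<tau>" "a' < \<tau>"
      have "mmul \<tau> G N a a' = (\<Sum>b<\<tau>. F a (i b) * ((1 / of_nat q) * (cnj (F a' (i b)) -
          (\<Sum>j<d. \<Sum>j'<d. cnj (F (\<tau> + j) (i b)) * cnj (Ti j' j) * cnj (F a' (u j'))))))"
        unfolding mmul_def N_def GF using a by (intro sum.cong) auto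
      also have "\<dots> = (if a = a' then 1 else 0)"
        by (rule inv_right_abs[OF qne R1[OF a] R2[OF a(1)] TiL])
      finally show "mmul \<tau> G N a a' = mid \<tau> a a'" unfolding mid_def using a by simp
    qed
  qed
  define BN where "BN = (1 + real d * real d * real q ^ (d - 1)) / real q"
  have GB: "\<forall>a<\<tau>. \<forall>b<\<tau>. cmod (G a b) \<le> 1" unfolding GF F_def by simp
  have NB: "\<forall>b<\<tau>. \<forall>a<\<tau>. cmod (N b a) \<le> BN"
  proof (intro allI impI)
    fix b a assume ba: "b < \<tau>" "a < \<tau>"
    have t: "cmod (cnj (F (\<tau> + j) (i b)) * cnj (Ti j' j) * cnj (F a (u j'))) \<le> real q ^ (d - 1)"
      if "j < d" "j' < d" for j j'
      using TiB[OF that(2,1)] by (simp add: norm_mult F_def)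
    have "cmod (\<Sum>j<d. \<Sum>j'<d. cnj (F (\<tau> + j) (i b)) * cnj (Ti j' j) * cnj (F a (u j')))
        \<le> (\<Sum>j<d. \<Sum>j'<d. cmod (cnj (F (\<tau> + j) (i b)) * cnj (Ti j' j) * cnj (F a (u j'))))"
      by (rule order_trans[OF norm_sum sum_mono[OF norm_sum]])
    also have "\<dots> \<le> (\<Sum>j<d. \<Sum>j'<d. real q ^ (d - 1))"
      using t by (intro sum_mono) auto
    also have "\<dots> = real d * real d * real q ^ (d - 1)" by simp
    finally have s: "cmod (\<Sum>j<d. \<Sum>j'<d. cnj (F (\<tau> + j) (i b)) * cnj (Ti j' j) * cnj (F a (u j')))
        \<le> real d * real d * real q ^ (d - 1)" .
    have "cmod (N b a) = cmod (cnj (F a (i b)) -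
      (\<Sum>j<d. \<Sum>j'<d. cnj (F (\<tau> + j) (i b)) * cnj (Ti j' j) * cnj (F a (u j')))) / real q"
      unfolding N_def using ba by (simp add: norm_mult norm_divide)
    also have "\<dots> \<le> (1 + real d * real d * real q ^ (d - 1)) / real q"
    proof (intro divide_right_mono)
      have "cmod (cnj (F a (i b))) = 1" by (simp add: F_def)
      then show "cmod (cnj (F a (i b)) -
        (\<Sum>j<d. \<Sum>j'<d. cnj (F (\<tau> + j) (i b)) * cnj (Ti j' j) * cnj (F a (u j'))))
        \<le> 1 + real d * real d * real q ^ (d - 1)"
        using s norm_triangle_ineq4[of "cnj (F a (i b))" "\<Sum>j<d. \<Sum>j'<d. cnj (F (\<tau> + j) (i b)) * cnj (Ti j' j) * cnj (F a (u j'))"]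
        by linarith
    qed simp
    finally show "cmod (N b a) \<le> BN" unfolding BN_def .
  qed
  have sG: "0 \<le> sigma_max \<tau> G \<and> sigma_max \<tau> G \<le> real \<tau> * 1" by (rule sigma_bound[OF t0 GB])
  have sN: "0 \<le> sigma_max \<tau> N \<and> sigma_max \<tau> N \<le> real \<tau> * BN" by (rule sigma_bound[OF t0 NB])
  have "cond_num \<tau> G \<le> real \<tau> * (real \<tau> * BN)"
    unfolding cond_num_def minvG using sG sN by (auto intro: mult_mono)
  then show ?thesis unfolding G_def BN_def d_def by simp
qed


lemma fin_arith:
  fixes q \<tau> :: nat
  assumes t0: "0 < \<tau>" and tq: "\<tau> < q"
  shows "real \<tau> * (real \<tau> * ((1 + real (q - \<tau>) * real (q - \<tau>) * real q ^ (q - \<tau> - 1)) / real q))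
     \<le> 2 * real q powr (real q - real \<tau> + 5.5)"
proof -
  define d where "d = q - \<tau>"
  have d1: "1 \<le> d" unfolding d_def using tq by simp
  have q1: "1 \<le> real q" using tq by simp
  have qpos: "0 < real q" using q1 by simp
  have td: "real \<tau> \<le> real q" "real d \<le> real q" using tq unfolding d_def by auto
  have qd: "real q ^ (d - 1) * real q = real q ^ d" using d1 by (simp add: power_eq_if)
  have e1: "real \<tau> * (real \<tau> * ((1 + real d * real d * real q ^ (d - 1)) / real q))
      = real \<tau> * real \<tau> / real q + real \<tau> * real \<tau> * (real d * real d) * real q ^ (d - 1) / real q"
    by (simp add: distrib_left add_divide_distrib mult_ac)
  have a1: "real \<tau> * real \<tau> / real q \<le> real q"
  proof -
    have "real \<tau> * real \<tau> \<le> real q * real q" using td by (intro mult_mono) auto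
    then show ?thesis using qpos by (simp add: divide_le_eq)
  qed
  have a2: "real q \<le> real q ^ (d + 2)"
    using q1 by (metis power_one_right power_increasing le_add2 add_2_eq_Suc' Suc_le_mono one_le_numeral le_trans le_add1)
  have a3: "real \<tau> * real \<tau> * (real d * real d) * real q ^ (d - 1) / real q \<le> real q ^ (d + 2)"
  proof -
    have "real \<tau> * real \<tau> * (real d * real d) \<le> real q * real q * (real q * real q)"
      using td by (intro mult_mono) auto
    then have "real \<tau> * real \<tau> * (real d * real d) * real q ^ (d - 1) \<le> real q * real q * (real q * real q) * real q ^ (d - 1)"
      by (intro mult_right_mono) auto
    also have "\<dots> = real q ^ (d + 2) * real q" using qd by (simp add: power_add power2_eq_square mult_ac)
    finally show ?thesis using qpos by (simp add: divide_le_eq)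
  qed
  have "real q ^ (d + 2) = real q powr (real (d + 2))"
    using qpos by (simp only: powr_realpow)
  also have "\<dots> = real q powr (real d + 2)" by (simp add: add.commute)
  also have "\<dots> \<le> real q powr (real d + 5.5)" using q1 by (intro powr_mono) auto
  finally have a4: "real q ^ (d + 2) \<le> real q powr (real d + 5.5)" .
  have "real q - real \<tau> = real d" unfolding d_def using tq by simp
  then show ?thesis unfolding d_def[symmetric] e1 using a1 a2 a3 a4 by simp
qed

lemma part2_final:
  "\<exists>C::real. \<forall>(n::nat) (p::nat) (kA::nat) (kB::nat) (q::nat) (i::nat \<Rightarrow> nat).
      0 < p \<and> 0 < kA \<and> 0 < kB \<and> odd q \<and> n \<le> q \<and> 2 * kA * kB * p - 1 < n \<and>
      (\<forall>b < 2 * p * kA * kB - 1. i b < n) \<and> inj_on i {..< 2 * p * kA * kB - 1} \<longrightarrow>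
      cond_num (2 * p * kA * kB - 1) (Gvand q p kA kB i)
        \<le> C * real q powr (real q - real (2 * p * kA * kB - 1) + 5.5)"
proof (intro exI allI impI)
  fix n p kA kB q :: nat and i :: "nat \<Rightarrow> nat"
  assume h: "0 < p \<and> 0 < kA \<and> 0 < kB \<and> odd q \<and> n \<le> q \<and> 2 * kA * kB * p - 1 < n \<and>
      (\<forall>b < 2 * p * kA * kB - 1. i b < n) \<and> inj_on i {..< 2 * p * kA * kB - 1}"
  define \<tau> where "\<tau> = 2 * p * kA * kB - 1"
  have pk: "1 \<le> p * kA * kB" using h by simp
  have t0: "0 < \<tau>" unfolding \<tau>_def using pk by linarith
  have tq: "\<tau> < q" unfolding \<tau>_def using h by (simp add: mult_ac)
  have q0: "0 < q" using tq by simp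
  have ib: "\<forall>b<\<tau>. i b < q" using h unfolding \<tau>_def by auto
  have inj: "inj_on i {..<\<tau>}" using h unfolding \<tau>_def by auto
  have G: "Gvand q p kA kB i = (\<lambda>a b. if a < \<tau> \<and> b < \<tau> then wq q ((int a - (int (p * kA * kB) - 1)) * int (i b)) else 0)"
    unfolding Gvand_def \<tau>_def wq_def by (intro ext) (simp add: cis_power_int mult_ac)
  have "cond_num \<tau> (Gvand q p kA kB i) \<le> real \<tau> * (real \<tau> * ((1 + real (q - \<tau>) * real (q - \<tau>) * real q ^ (q - \<tau> - 1)) / real q))"
    unfolding G by (rule part2[OF q0 t0 tq ib inj])
  also have "\<dots> \<le> 2 * real q powr (real q - real \<tau> + 5.5)" by (rule fin_arith[OF t0 tq])
  finally show "cond_num (2 * p * kA * kB - 1) (Gvand q p kA kB i)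
        \<le> 2 * real q powr (real q - real (2 * p * kA * kB - 1) + 5.5)" unfolding \<tau>_def .
qed


lemma sum3: "(\<Sum>i\<in>A. \<Sum>j\<in>B. \<Sum>l\<in>C. f i j l) = (\<Sum>(i,j,l)\<in>A\<times>B\<times>C. f i j l)"
  by (simp add: sum.cartesian_product)

lemma kron_vstack:
  assumes z: "0 < \<zeta>" and s: "s < 2 * \<zeta>"
  shows "mmul (2 * \<zeta>) (kron \<zeta> \<zeta> R (mid \<zeta>)) (vstack \<zeta> X Y) s x =
         R (s div \<zeta>) 0 * X (s mod \<zeta>) x + R (s div \<zeta>) 1 * Y (s mod \<zeta>) x"
proof -
  have sm: "s mod \<zeta> < \<zeta>" using z by simp
  have "mmul (2 * \<zeta>) (kron \<zeta> \<zeta> R (mid \<zeta>)) (vstack \<zeta> X Y) s x =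
        (\<Sum>c<\<zeta> + \<zeta>. kron \<zeta> \<zeta> R (mid \<zeta>) s c * vstack \<zeta> X Y c x)"
    unfolding mmul_def by (simp add: mult_2)
  also have "\<dots> = (\<Sum>c<\<zeta>. kron \<zeta> \<zeta> R (mid \<zeta>) s c * vstack \<zeta> X Y c x) +
                  (\<Sum>c<\<zeta>. kron \<zeta> \<zeta> R (mid \<zeta>) s (\<zeta> + c) * vstack \<zeta> X Y (\<zeta> + c) x)"
    by (rule split_rows)
  also have "(\<Sum>c<\<zeta>. kron \<zeta> \<zeta> R (mid \<zeta>) s c * vstack \<zeta> X Y c x) =
             (\<Sum>c<\<zeta>. if s mod \<zeta> = c then R (s div \<zeta>) 0 * X c x else 0)"
    by (intro sum.cong refl) (auto simp: kron_def mid_def vstack_def sm)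
  also have "(\<Sum>c<\<zeta>. kron \<zeta> \<zeta> R (mid \<zeta>) s (\<zeta> + c) * vstack \<zeta> X Y (\<zeta> + c) x) =
             (\<Sum>c<\<zeta>. if s mod \<zeta> = c then R (s div \<zeta>) 1 * Y c x else 0)"
  proof (intro sum.cong refl)
    fix c assume c: "c \<in> {..<\<zeta>}"
    have "(\<zeta> + c) div \<zeta> = 1" "(\<zeta> + c) mod \<zeta> = c" using c z by auto
    then show "kron \<zeta> \<zeta> R (mid \<zeta>) s (\<zeta> + c) * vstack \<zeta> X Y (\<zeta> + c) x =
             (if s mod \<zeta> = c then R (s div \<zeta>) 1 * Y c x else 0)"
      using c by (auto simp: kron_def mid_def vstack_def sm)
  qed
  finally show ?thesis using sm by (simp add: sum.delta)
qed

lemma sum2_expand: "(\<Sum>l<2. f l) = f 0 + f (1::nat)"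
  by (simp add: numeral_2_eq_2)

lemma encA_formula:
  fixes \<zeta> :: nat
  assumes z: "\<zeta> = t div (2*p)" "0 < \<zeta>" and s: "s < 2 * \<zeta>"
  shows "encA q p kA t r k A s x = (\<Sum>(i,j,l)\<in>{..<p}\<times>{..<kA}\<times>{..<2}.
     rot (of_int (int k * ((int j - 1) * int p + int i + 1)) * (- (2*pi/real q))) (s div \<zeta>) l *
       A ((2*i+l) * \<zeta> + s mod \<zeta>) (j * (r div kA) + x))"
proof -
  have "encA q p kA t r k A s x = (\<Sum>i<p. \<Sum>j<kA. \<Sum>l<2.
     rot (of_int (int k * ((int j - 1) * int p + int i + 1)) * (- (2*pi/real q))) (s div \<zeta>) l *
       A ((2*i+l) * \<zeta> + s mod \<zeta>) (j * (r div kA) + x))"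
    unfolding encA_def Let_def z(1)[symmetric]
    by (simp add: kron_vstack[OF z(2) s] mipow_rot blk_def bidx_def sum2_expand)
  also have "\<dots> = (\<Sum>(i,j,l)\<in>{..<p}\<times>{..<kA}\<times>{..<2}.
     rot (of_int (int k * ((int j - 1) * int p + int i + 1)) * (- (2*pi/real q))) (s div \<zeta>) l *
       A ((2*i+l) * \<zeta> + s mod \<zeta>) (j * (r div kA) + x))"
    by (rule sum3)
  finally show ?thesis .
qed

lemma encB_formula:
  fixes \<zeta> :: nat
  assumes z: "\<zeta> = t div (2*p)" "0 < \<zeta>" and s: "s < 2 * \<zeta>"
  shows "encB q p kA kB t w k B s y = (\<Sum>(i,j,l)\<in>{..<p}\<times>{..<kB}\<times>{..<2}.
     rot (of_int (int k * (int p - 1 - int i + int j * int p * int kA)) * (2*pi/real q)) (s div \<zeta>) l *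
       B ((2*i+l) * \<zeta> + s mod \<zeta>) (j * (w div kB) + y))"
proof -
  have "encB q p kA kB t w k B s y = (\<Sum>i<p. \<Sum>j<kB. \<Sum>l<2.
     rot (of_int (int k * (int p - 1 - int i + int j * int p * int kA)) * (2*pi/real q)) (s div \<zeta>) l *
       B ((2*i+l) * \<zeta> + s mod \<zeta>) (j * (w div kB) + y))"
    unfolding encB_def Let_def z(1)[symmetric]
    by (simp add: kron_vstack[OF z(2) s] mipow_rot blk_def bidx_def sum2_expand)
  also have "\<dots> = (\<Sum>(i,j,l)\<in>{..<p}\<times>{..<kB}\<times>{..<2}.
     rot (of_int (int k * (int p - 1 - int i + int j * int p * int kA)) * (2*pi/real q)) (s div \<zeta>) l *
       B ((2*i+l) * \<zeta> + s mod \<zeta>) (j * (w div kB) + y))"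
    by (rule sum3)
  finally show ?thesis .
qed


lemma rot_pair:
  assumes "uu < 2" "vv < 2"
  shows "rot a 0 uu * rot b 0 vv + rot a 1 uu * rot b 1 vv = rot (b - a) uu vv"
  using assms
  by (cases "uu = 0"; cases "vv = 0") (auto simp: rot_def cos_diff sin_diff algebra_simps)

lemma pair_sum:
  fixes \<zeta> :: nat and g :: "nat \<Rightarrow> real"
  shows "(\<Sum>s<2*\<zeta>. PP (s div \<zeta>) uu * g (s mod \<zeta>) * (QQ (s div \<zeta>) vv * h (s mod \<zeta>))) =
         (PP 0 uu * QQ 0 vv + PP 1 uu * QQ 1 vv) * (\<Sum>s0<\<zeta>. g s0 * h s0)"
proof (cases "\<zeta> = 0")
  case True then show ?thesis by simp
next
  case False
  have "(\<Sum>s<2*\<zeta>. PP (s div \<zeta>) uu * g (s mod \<zeta>) * (QQ (s div \<zeta>) vv * h (s mod \<zeta>))) =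
     (\<Sum>s<\<zeta>. PP (s div \<zeta>) uu * g (s mod \<zeta>) * (QQ (s div \<zeta>) vv * h (s mod \<zeta>))) +
     (\<Sum>s<\<zeta>. PP ((\<zeta> + s) div \<zeta>) uu * g ((\<zeta> + s) mod \<zeta>) * (QQ ((\<zeta> + s) div \<zeta>) vv * h ((\<zeta> + s) mod \<zeta>)))"
    unfolding mult_2 by (rule split_rows)
  also have "\<dots> = (\<Sum>s<\<zeta>. PP 0 uu * g s * (QQ 0 vv * h s)) + (\<Sum>s<\<zeta>. PP 1 uu * g s * (QQ 1 vv * h s))"
    using False by (intro arg_cong2[where f="(+)"] sum.cong refl) auto
  also have "\<dots> = (PP 0 uu * QQ 0 vv) * (\<Sum>s0<\<zeta>. g s0 * h s0) + (PP 1 uu * QQ 1 vv) * (\<Sum>s0<\<zeta>. g s0 * h s0)"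
    by (simp add: sum_distrib_left mult_ac)
  also have "\<dots> = (PP 0 uu * QQ 0 vv + PP 1 uu * QQ 1 vv) * (\<Sum>s0<\<zeta>. g s0 * h s0)"
    by (simp add: distrib_right)
  finally show ?thesis .
qed

definition mab :: "nat \<Rightarrow> nat \<Rightarrow> nat \<times> nat \<times> nat \<Rightarrow> nat \<times> nat \<times> nat \<Rightarrow> int" where
  "mab p kA a b = (case a of (ia, ja, la) \<Rightarrow> case b of (ib, jb, lb) \<Rightarrow>
     int ja * int p + int ia - int ib + int jb * int p * int kA)"

definition Dab :: "nat \<Rightarrow> nat \<Rightarrow> nat \<Rightarrow> (nat \<Rightarrow> nat \<Rightarrow> real) \<Rightarrow> (nat \<Rightarrow> nat \<Rightarrow> real) \<Rightarrow> nat \<Rightarrow> nat \<Rightarrow>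
    nat \<times> nat \<times> nat \<Rightarrow> nat \<times> nat \<times> nat \<Rightarrow> real" where
  "Dab \<zeta> cA cB A B x y a b = (case a of (ia, ja, la) \<Rightarrow> case b of (ib, jb, lb) \<Rightarrow>
     (\<Sum>s0<\<zeta>. A ((2*ia+la) * \<zeta> + s0) (ja * cA + x) * B ((2*ib+lb) * \<zeta> + s0) (jb * cB + y)))"

lemma WO:
  fixes \<zeta> :: nat
  assumes z: "\<zeta> = t div (2*p)"
  shows "worker_out q p kA kB t r w A B k x y =
    (\<Sum>a\<in>{..<p}\<times>{..<kA}\<times>{..<2}. \<Sum>b\<in>{..<p}\<times>{..<kB}\<times>{..<2}.
       rot (2*pi/real q * of_int (int k * mab p kA a b)) (snd (snd a)) (snd (snd b)) *
       Dab \<zeta> (r div kA) (w div kB) A B x y a b)"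
proof -
  define IA where "IA = {..<p}\<times>{..<kA}\<times>{..<(2::nat)}"
  define IB where "IB = {..<p}\<times>{..<kB}\<times>{..<(2::nat)}"
  define fA where "fA a s = (case a of (i,j,l) \<Rightarrow>
     rot (of_int (int k * ((int j - 1) * int p + int i + 1)) * (- (2*pi/real q))) (s div \<zeta>) l *
       A ((2*i+l) * \<zeta> + s mod \<zeta>) (j * (r div kA) + x))" for a s
  define fB where "fB b s = (case b of (i,j,l) \<Rightarrow>
     rot (of_int (int k * (int p - 1 - int i + int j * int p * int kA)) * (2*pi/real q)) (s div \<zeta>) l *
       B ((2*i+l) * \<zeta> + s mod \<zeta>) (j * (w div kB) + y))" for b s
  have "worker_out q p kA kB t r w A B k x y = (\<Sum>s<2*\<zeta>. encA q p kA t r k A s x * encB q p kA kB t w k B s y)"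
    unfolding worker_out_def mmul_def mtrans_def z ..
  also have "\<dots> = (\<Sum>s<2*\<zeta>. (\<Sum>a\<in>IA. fA a s) * (\<Sum>b\<in>IB. fB b s))"
  proof (intro sum.cong refl)
    fix s assume "s \<in> {..<2*\<zeta>}"
    then have s: "s < 2 * \<zeta>" and zp: "0 < \<zeta>" by auto
    show "encA q p kA t r k A s x * encB q p kA kB t w k B s y = (\<Sum>a\<in>IA. fA a s) * (\<Sum>b\<in>IB. fB b s)"
      unfolding encA_formula[OF z zp s] encB_formula[OF z zp s] IA_def IB_def fA_def fB_def
      by (simp add: case_prod_beta)
  qed
  also have "\<dots> = (\<Sum>s<2*\<zeta>. \<Sum>a\<in>IA. \<Sum>b\<in>IB. fA a s * fB b s)"
    by (simp add: sum_product)
  also have "\<dots> = (\<Sum>a\<in>IA. \<Sum>s<2*\<zeta>. \<Sum>b\<in>IB. fA a s * fB b s)"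
    by (rule sum.swap)
  also have "\<dots> = (\<Sum>a\<in>IA. \<Sum>b\<in>IB. \<Sum>s<2*\<zeta>. fA a s * fB b s)"
    by (rule sum.cong[OF refl], rule sum.swap)
  also have "\<dots> = (\<Sum>a\<in>IA. \<Sum>b\<in>IB.
       rot (2*pi/real q * of_int (int k * mab p kA a b)) (snd (snd a)) (snd (snd b)) *
       Dab \<zeta> (r div kA) (w div kB) A B x y a b)"
  proof (intro sum.cong refl)
    fix a b assume a: "a \<in> IA" and b: "b \<in> IB"
    obtain ia ja la where av: "a = (ia, ja, la)" by (cases a) auto
    obtain ib jb lb where bv: "b = (ib, jb, lb)" by (cases b) auto
    have l: "la < 2" "lb < 2" using a b av bv unfolding IA_def IB_def by auto
    define RA where "RA = rot (of_int (int k * ((int ja - 1) * int p + int ia + 1)) * (- (2*pi/real q)))"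
    define RB where "RB = rot (of_int (int k * (int p - 1 - int ib + int jb * int p * int kA)) * (2*pi/real q))"
    have "(\<Sum>s<2*\<zeta>. fA a s * fB b s) = (\<Sum>s<2*\<zeta>. RA (s div \<zeta>) la * (\<lambda>s0. A ((2*ia+la) * \<zeta> + s0) (ja * (r div kA) + x)) (s mod \<zeta>) *
          (RB (s div \<zeta>) lb * (\<lambda>s0. B ((2*ib+lb) * \<zeta> + s0) (jb * (w div kB) + y)) (s mod \<zeta>)))"
      unfolding fA_def fB_def av bv RA_def RB_def by simp
    also have "\<dots> = (RA 0 la * RB 0 lb + RA 1 la * RB 1 lb) * Dab \<zeta> (r div kA) (w div kB) A B x y a b"
      using pair_sum[where PP=RA and uu=la and QQ=RB and vv=lb and \<zeta>=\<zeta>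
          and g="\<lambda>s0. A ((2*ia+la) * \<zeta> + s0) (ja * (r div kA) + x)"
          and h="\<lambda>s0. B ((2*ib+lb) * \<zeta> + s0) (jb * (w div kB) + y)"]
      unfolding av bv Dab_def by simp
    also have "RA 0 la * RB 0 lb + RA 1 la * RB 1 lb = rot (2*pi/real q * of_int (int k * mab p kA a b)) la lb"
      unfolding RA_def RB_def rot_pair[OF l]
      by (rule arg_cong[where f="\<lambda>v. rot v la lb"]) (simp add: av bv mab_def algebra_simps add_divide_distrib diff_divide_distrib)
    finally show "(\<Sum>s<2*\<zeta>. fA a s * fB b s) = rot (2*pi/real q * of_int (int k * mab p kA a b)) (snd (snd a)) (snd (snd b)) *
       Dab \<zeta> (r div kA) (w div kB) A B x y a b" using av bv by simp
  qed
  finally show ?thesis unfolding IA_def IB_def .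
qed


definition rho1 :: "nat \<Rightarrow> nat \<Rightarrow> complex" where
  "rho1 l l' = (if l = l' then 1/2 else if l = 0 then \<i>/2 else - \<i>/2)"

definition rho2 :: "nat \<Rightarrow> nat \<Rightarrow> complex" where
  "rho2 l l' = cnj (rho1 l l')"

lemma rot_wq:
  assumes "l < 2" "l' < 2"
  shows "complex_of_real (rot (2*pi/real q * of_int M) l l') = rho1 l l' * wq q M + rho2 l l' * wq q (- M)"
proof -
  have ang: "2 * pi * of_int M / real q = 2*pi/real q * of_int M" by simp
  have ang2: "2 * pi * of_int (- M) / real q = - (2*pi/real q * of_int M)" by simp
  show ?thesis
    using assms unfolding wq_def ang ang2
    by (cases "l = 0"; cases "l' = 0")
       (auto simp: rot_def rho1_def rho2_def complex_eq_iff cis.sel)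
qed

definition coefs :: "nat \<Rightarrow> nat \<Rightarrow> nat \<Rightarrow> nat \<Rightarrow> nat \<Rightarrow> nat \<Rightarrow> (nat \<Rightarrow> nat \<Rightarrow> real) \<Rightarrow> (nat \<Rightarrow> nat \<Rightarrow> real) \<Rightarrow> nat \<Rightarrow> nat \<Rightarrow> nat \<Rightarrow> complex" where
  "coefs p kA kB t r w A B x y n =
    (\<Sum>a\<in>{..<p}\<times>{..<kA}\<times>{..<2}. \<Sum>b\<in>{..<p}\<times>{..<kB}\<times>{..<2}.
       of_real (Dab (t div (2*p)) (r div kA) (w div kB) A B x y a b) *
       (rho1 (snd (snd a)) (snd (snd b)) * (if int n = int (p*kA*kB) - 1 + mab p kA a b then 1 else 0) +
        rho2 (snd (snd a)) (snd (snd b)) * (if int n = int (p*kA*kB) - 1 - mab p kA a b then 1 else 0)))"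

lemma mab_range:
  assumes a: "a \<in> {..<p}\<times>{..<kA}\<times>{..<2}" and b: "b \<in> {..<p}\<times>{..<kB}\<times>{..<(2::nat)}"
  shows "- (int p - 1) \<le> mab p kA a b \<and> mab p kA a b \<le> int (p*kA*kB) - 1"
proof -
  obtain ia ja la where av: "a = (ia, ja, la)" by (cases a) auto
  obtain ib jb lb where bv: "b = (ib, jb, lb)" by (cases b) auto
  have h: "ia < p" "ja < kA" "ib < p" "jb < kB" using a b av bv by auto
  have f1: "int ja * int p + int p \<le> int kA * int p"
    using h mult_right_mono[of "int ja + 1" "int kA" "int p"] by (simp add: algebra_simps)
  have f2: "int jb * (int kA * int p) + int kA * int p \<le> int kB * (int kA * int p)"
    using h mult_right_mono[of "int jb + 1" "int kB" "int kA * int p"] by (simp add: algebra_simps)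
  have f3: "0 \<le> int ja * int p" "0 \<le> int jb * (int kA * int p)" by auto
  have f4: "int kA * int p \<le> int kB * (int kA * int p)"
    using h mult_right_mono[of 1 "int kB" "int kA * int p"] by simp
  have m: "mab p kA a b = int ja * int p + int ia - int ib + int jb * (int kA * int p)"
    unfolding av bv mab_def by (simp add: mult_ac)
  have P: "int (p*kA*kB) = int kB * (int kA * int p)" by (simp add: mult_ac)
  show ?thesis unfolding m P using f1 f2 f3 f4 h by linarith
qed

lemma sum_delta_int:
  fixes f :: "nat \<Rightarrow> complex"
  assumes "0 \<le> E" "E < int N"
  shows "(\<Sum>n<N. (if int n = E then f n else 0)) = f (nat E)"
proof -
  have "(\<Sum>n<N. (if int n = E then f n else 0)) = (\<Sum>n<N. (if n = nat E then f n else 0))"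
    using assms by (intro sum.cong refl) auto
  also have "\<dots> = f (nat E)" using assms by (simp add: sum.delta')
  finally show ?thesis .
qed


lemma poly_rep:
  assumes p: "0 < p" "0 < kA" "0 < kB"
  shows "(\<Sum>n<2*p*kA*kB - 1. coefs p kA kB t r w A B x y n * wq q (int k * int n)) =
    wq q (int k * (int (p*kA*kB) - 1)) * of_real (worker_out q p kA kB t r w A B k x y)"
proof -
  define K where "K = int (p*kA*kB) - 1"
  define N where "N = 2*p*kA*kB - 1"
  define IA where "IA = {..<p}\<times>{..<kA}\<times>{..<(2::nat)}"
  define IB where "IB = {..<p}\<times>{..<kB}\<times>{..<(2::nat)}"
  define D where "D = Dab (t div (2*p)) (r div kA) (w div kB) A B x y"
  have pk: "p \<le> p*kA*kB" using p by simp
  have NK: "int N = 2 * K + 1" unfolding N_def K_def using p by (simp add: of_nat_diff)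
  have Kp: "int p - 1 \<le> K" unfolding K_def using pk by linarith
  have trm: "(\<Sum>n<N. of_real (D a b) * (rho1 (snd (snd a)) (snd (snd b)) * (if int n = K + mab p kA a b then 1 else 0) +
        rho2 (snd (snd a)) (snd (snd b)) * (if int n = K - mab p kA a b then 1 else 0)) * wq q (int k * int n))
      = wq q (int k * K) * (of_real (D a b) * of_real (rot (2*pi/real q * of_int (int k * mab p kA a b)) (snd (snd a)) (snd (snd b))))"
    if a: "a \<in> IA" and b: "b \<in> IB" for a b
  proof -
    define m where "m = mab p kA a b"
    have mr: "- (int p - 1) \<le> m \<and> m \<le> K" using mab_range[of a p kA b kB] a b unfolding IA_def IB_def m_def K_def by auto
    have l: "snd (snd a) < 2" "snd (snd b) < 2" using a b unfolding IA_def IB_def by auto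
    define r1 where "r1 = rho1 (snd (snd a)) (snd (snd b))"
    define r2 where "r2 = rho2 (snd (snd a)) (snd (snd b))"
    have "(\<Sum>n<N. of_real (D a b) * (r1 * (if int n = K + m then 1 else 0) + r2 * (if int n = K - m then 1 else 0)) * wq q (int k * int n))
       = of_real (D a b) * r1 * (\<Sum>n<N. (if int n = K + m then wq q (int k * int n) else 0))
         + of_real (D a b) * r2 * (\<Sum>n<N. (if int n = K - m then wq q (int k * int n) else 0))"
    proof -
      have pt: "of_real (D a b) * (r1 * (if int n = K + m then 1 else 0) + r2 * (if int n = K - m then 1 else 0)) * wq q (int k * int n)
        = of_real (D a b) * r1 * (if int n = K + m then wq q (int k * int n) else 0)
         + of_real (D a b) * r2 * (if int n = K - m then wq q (int k * int n) else 0)" for n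
        by (simp add: algebra_simps)
      show ?thesis unfolding pt by (simp add: sum.distrib sum_distrib_left)
    qed
    also have "(\<Sum>n<N. (if int n = K + m then wq q (int k * int n) else 0)) = wq q (int k * (K + m))"
      using mr Kp NK by (subst sum_delta_int) auto
    also have "(\<Sum>n<N. (if int n = K - m then wq q (int k * int n) else 0)) = wq q (int k * (K - m))"
      using mr Kp NK by (subst sum_delta_int) auto
    also have "of_real (D a b) * r1 * wq q (int k * (K + m)) + of_real (D a b) * r2 * wq q (int k * (K - m))
       = wq q (int k * K) * (of_real (D a b) * (r1 * wq q (int k * m) + r2 * wq q (- (int k * m))))"
      by (simp add: distrib_left wq_add[symmetric] algebra_simps)
    also have "r1 * wq q (int k * m) + r2 * wq q (- (int k * m)) = of_real (rot (2*pi/real q * of_int (int k * m)) (snd (snd a)) (snd (snd b)))"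
      unfolding r1_def r2_def by (rule rot_wq[OF l, symmetric])
    finally show ?thesis unfolding r1_def r2_def m_def .
  qed
  have "(\<Sum>n<N. coefs p kA kB t r w A B x y n * wq q (int k * int n)) =
      (\<Sum>n<N. \<Sum>a\<in>IA. \<Sum>b\<in>IB. of_real (D a b) * (rho1 (snd (snd a)) (snd (snd b)) * (if int n = K + mab p kA a b then 1 else 0) +
        rho2 (snd (snd a)) (snd (snd b)) * (if int n = K - mab p kA a b then 1 else 0)) * wq q (int k * int n))"
    unfolding coefs_def K_def IA_def IB_def D_def by (simp add: sum_distrib_right)
  also have "\<dots> = (\<Sum>a\<in>IA. \<Sum>n<N. \<Sum>b\<in>IB. of_real (D a b) * (rho1 (snd (snd a)) (snd (snd b)) * (if int n = K + mab p kA a b then 1 else 0) +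
        rho2 (snd (snd a)) (snd (snd b)) * (if int n = K - mab p kA a b then 1 else 0)) * wq q (int k * int n))"
    by (rule sum.swap)
  also have "\<dots> = (\<Sum>a\<in>IA. \<Sum>b\<in>IB. \<Sum>n<N. of_real (D a b) * (rho1 (snd (snd a)) (snd (snd b)) * (if int n = K + mab p kA a b then 1 else 0) +
        rho2 (snd (snd a)) (snd (snd b)) * (if int n = K - mab p kA a b then 1 else 0)) * wq q (int k * int n))"
    by (rule sum.cong[OF refl], rule sum.swap)
  also have "\<dots> = (\<Sum>a\<in>IA. \<Sum>b\<in>IB. wq q (int k * K) * (of_real (D a b) * of_real (rot (2*pi/real q * of_int (int k * mab p kA a b)) (snd (snd a)) (snd (snd b)))))"
    using trm by (intro sum.cong refl) auto
  also have "\<dots> = wq q (int k * K) * of_real (worker_out q p kA kB t r w A B k x y)"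
    unfolding WO[OF refl] IA_def IB_def D_def by (simp add: sum_distrib_left mult_ac)
  finally show ?thesis unfolding N_def K_def .
qed


lemma small_mult: fixes n u :: int assumes "0 < n" "\<bar>n * u\<bar> < n" shows "u = 0"
proof (rule ccontr)
  assume "u \<noteq> 0"
  then have "1 \<le> \<bar>u\<bar>" by simp
  then have "n * 1 \<le> n * \<bar>u\<bar>" using assms by (intro mult_left_mono) auto
  then show False using assms by (simp add: abs_mult)
qed

lemma nt1:
  fixes p kA ia ib ja j0 jb j0' :: nat
  assumes "ia < p" "ib < p" "ja < kA" "j0 < kA"
  shows "(int ja * int p + int ia - int ib + int jb * int p * int kA = int j0 * int p + int j0' * int p * int kA)
     \<longleftrightarrow> (ia = ib \<and> ja = j0 \<and> jb = j0')"
proof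
  assume h: "int ja * int p + int ia - int ib + int jb * int p * int kA = int j0 * int p + int j0' * int p * int kA"
  define u where "u = (int j0 - int ja) + int kA * (int j0' - int jb)"
  have e: "int ia - int ib = int p * u" using h unfolding u_def by (simp add: algebra_simps)
  have "u = 0" using assms e by (intro small_mult[of "int p"]) auto
  then have ii: "ia = ib" using e by simp
  have e2: "int j0 - int ja = int kA * (int jb - int j0')" using \<open>u = 0\<close> unfolding u_def by (simp add: algebra_simps)
  have "int jb - int j0' = 0" using assms e2 by (intro small_mult[of "int kA"]) auto
  then show "ia = ib \<and> ja = j0 \<and> jb = j0'" using e2 ii by simp
qed simp

lemma nt2:
  fixes p kA ia ib ja j0 jb j0' :: nat
  assumes "ia < p" "ib < p" "0 < kA"
  shows "(int ja * int p + int ia - int ib + int jb * int p * int kA = - (int j0 * int p + int j0' * int p * int kA))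
     \<longleftrightarrow> (ia = ib \<and> ja = 0 \<and> jb = 0 \<and> j0 = 0 \<and> j0' = 0)"
proof
  assume h: "int ja * int p + int ia - int ib + int jb * int p * int kA = - (int j0 * int p + int j0' * int p * int kA)"
  define u where "u = int ja + int j0 + int kA * (int jb + int j0')"
  have e: "int ib - int ia = int p * u" using h unfolding u_def by (simp add: algebra_simps)
  have u0: "0 \<le> u" unfolding u_def by simp
  have "\<bar>int p * u\<bar> < int p" using e assms by linarith
  then have "u = 0" using assms by (intro small_mult[of "int p"]) auto
  then show "ia = ib \<and> ja = 0 \<and> jb = 0 \<and> j0 = 0 \<and> j0' = 0"
    using e assms(3) unfolding u_def by (auto simp: add_nonneg_eq_0_iff)
qed auto

lemma blocksum:
  fixes f :: "nat \<Rightarrow> real"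
  shows "(\<Sum>i<p. \<Sum>l<2. \<Sum>s0<\<zeta>. f ((2*i+l)*\<zeta> + s0)) = (\<Sum>s<2*p*\<zeta>. f s)"
proof (induction p)
  case 0 then show ?case by simp
next
  case (Suc p)
  have a: "(\<Sum>l<2. \<Sum>s0<\<zeta>. f ((2*p+l)*\<zeta> + s0)) = (\<Sum>s<2*\<zeta>. f (2*p*\<zeta> + s))"
  proof -
    have "(\<Sum>s<2*\<zeta>. f (2*p*\<zeta> + s)) = (\<Sum>s<\<zeta>. f (2*p*\<zeta> + s)) + (\<Sum>s<\<zeta>. f (2*p*\<zeta> + (\<zeta> + s)))"
      unfolding mult_2[of \<zeta>] by (rule split_rows)
    then show ?thesis by (simp add: sum2_expand algebra_simps)
  qed
  have b: "(\<Sum>s<2*Suc p*\<zeta>. f s) = (\<Sum>s<2*p*\<zeta>. f s) + (\<Sum>s<2*\<zeta>. f (2*p*\<zeta> + s))"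
  proof -
    have "2*Suc p*\<zeta> = 2*p*\<zeta> + 2*\<zeta>" by simp
    then show ?thesis by (simp only: split_rows)
  qed
  show ?case using Suc a b by simp
qed


lemma Re_rho: "Re (rho1 l l') = (if l = l' then 1/2 else 0)" "Re (rho2 l l') = (if l = l' then 1/2 else 0)"
  by (auto simp: rho1_def rho2_def)

lemma extract_lem:
  fixes p kA kB t r w j0 j0' x y :: nat
  assumes p: "0 < p" "0 < kA" "0 < kB" and t: "t = 2*p*(t div (2*p))"
    and j: "j0 < kA" "j0' < kB"
  shows "mmul t (mtrans A) B (j0 * (r div kA) + x) (j0' * (w div kB) + y) =
    Re (coefs p kA kB t r w A B x y (nat (int (p*kA*kB) - 1 + (int j0 * int p + int j0' * int p * int kA))))
    * (if int j0 * int p + int j0' * int p * int kA = 0 then 1 else 2)"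
proof -
  define \<zeta> where "\<zeta> = t div (2*p)"
  define m0 where "m0 = int j0 * int p + int j0' * int p * int kA"
  define K where "K = int (p*kA*kB) - 1"
  define IA where "IA = {..<p}\<times>{..<kA}\<times>{..<(2::nat)}"
  define IB where "IB = {..<p}\<times>{..<kB}\<times>{..<(2::nat)}"
  define D where "D = Dab \<zeta> (r div kA) (w div kB) A B x y"
  define fac :: real where "fac = (if m0 = 0 then 1 else 2)"
  have K0: "0 \<le> K" unfolding K_def using p by simp
  have m00: "0 \<le> m0" unfolding m0_def by simp
  have n0: "int (nat (K + m0)) = K + m0" using K0 m00 by simp
  define n0 where "n0 = nat (K + m0)"
  have w: "fac * ((if snd (snd a) = snd (snd b) then 1/2 else 0) *
            ((if int n0 = K + mab p kA a b then 1 else 0) + (if int n0 = K - mab p kA a b then 1 else 0)))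
        = (if snd (snd a) = snd (snd b) \<and> fst a = fst b \<and> fst (snd a) = j0 \<and> fst (snd b) = j0' then 1 else 0)"
    if a: "a \<in> IA" and b: "b \<in> IB" for a b
  proof -
    obtain ia ja la where av: "a = (ia, ja, la)" by (cases a) auto
    obtain ib jb lb where bv: "b = (ib, jb, lb)" by (cases b) auto
    have h: "ia < p" "ja < kA" "ib < p" "jb < kB" using a b av bv unfolding IA_def IB_def by auto
    have e1': "(mab p kA a b = m0) \<longleftrightarrow> (ia = ib \<and> ja = j0 \<and> jb = j0')"
      unfolding av bv mab_def m0_def using nt1[of ia p ib ja kA j0 jb j0'] h j by simp
    have e2': "(mab p kA a b = - m0) \<longleftrightarrow> (ia = ib \<and> ja = 0 \<and> jb = 0 \<and> j0 = 0 \<and> j0' = 0)"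
      unfolding av bv mab_def m0_def using nt2[of ia p ib kA ja jb j0 j0'] h p by simp
    have e1: "(int n0 = K + mab p kA a b) \<longleftrightarrow> (ia = ib \<and> ja = j0 \<and> jb = j0')"
      unfolding n0_def n0 e1'[symmetric] by auto
    have e2: "(int n0 = K - mab p kA a b) \<longleftrightarrow> (ia = ib \<and> ja = 0 \<and> jb = 0 \<and> j0 = 0 \<and> j0' = 0)"
      unfolding n0_def n0 e2'[symmetric] by auto
    have e3: "m0 = 0 \<longleftrightarrow> j0 = 0 \<and> j0' = 0" unfolding m0_def using p by (auto simp: add_nonneg_eq_0_iff)
    show ?thesis unfolding e1 e2 fac_def e3 using av bv by auto
  qed
  have pt: "Re (of_real d * (z1 * (if c then 1 else 0) + z2 * (if c' then 1 else 0))) =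
      d * (Re z1 * (if c then 1 else 0) + Re z2 * (if c' then 1 else 0))" for d z1 z2 c c'
    by auto
  have "Re (coefs p kA kB t r w A B x y n0) * fac =
     (\<Sum>a\<in>IA. \<Sum>b\<in>IB. Re (of_real (D a b) * (rho1 (snd (snd a)) (snd (snd b)) * (if int n0 = K + mab p kA a b then 1 else 0) +
        rho2 (snd (snd a)) (snd (snd b)) * (if int n0 = K - mab p kA a b then 1 else 0)))) * fac"
    unfolding coefs_def K_def[symmetric] IA_def[symmetric] IB_def[symmetric] \<zeta>_def[symmetric] D_def[symmetric]
    by (simp only: Re_sum)
  also have "\<dots> = (\<Sum>a\<in>IA. \<Sum>b\<in>IB. D a b * (fac * ((if snd (snd a) = snd (snd b) then 1/2 else 0) *
            ((if int n0 = K + mab p kA a b then 1 else 0) + (if int n0 = K - mab p kA a b then 1 else 0)))))"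
    unfolding pt Re_rho sum_distrib_right by (intro sum.cong refl) (simp add: algebra_simps)
  also have "\<dots> = (\<Sum>a\<in>IA. \<Sum>b\<in>IB. D a b * (if snd (snd a) = snd (snd b) \<and> fst a = fst b \<and> fst (snd a) = j0 \<and> fst (snd b) = j0' then 1 else 0))"
    using w by (intro sum.cong refl) auto
  also have "\<dots> = (\<Sum>a\<in>IA. if fst (snd a) = j0 then D a (fst a, j0', snd (snd a)) else 0)"
  proof (intro sum.cong refl)
    fix a assume a: "a \<in> IA"
    obtain ia ja la where av: "a = (ia, ja, la)" by (cases a) auto
    have inB: "(ia, j0', la) \<in> IB" using a av j unfolding IA_def IB_def by auto
    have "(\<Sum>b\<in>IB. D a b * (if snd (snd a) = snd (snd b) \<and> fst a = fst b \<and> fst (snd a) = j0 \<and> fst (snd b) = j0' then 1 else 0))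
        = (\<Sum>b\<in>IB. if ja = j0 then (if b = (ia, j0', la) then D a b else 0) else 0)"
      using av by (intro sum.cong refl) auto
    also have "\<dots> = (if ja = j0 then D a (ia, j0', la) else 0)"
      using inB by (simp add: sum.delta sum.delta' IB_def)
    finally show "(\<Sum>b\<in>IB. D a b * (if snd (snd a) = snd (snd b) \<and> fst a = fst b \<and> fst (snd a) = j0 \<and> fst (snd b) = j0' then 1 else 0))
        = (if fst (snd a) = j0 then D a (fst a, j0', snd (snd a)) else 0)" using av by simp
  qed
  also have "\<dots> = (\<Sum>i<p. \<Sum>jj<kA. \<Sum>l<2. if jj = j0 then D (i, jj, l) (i, j0', l) else 0)"
    unfolding IA_def sum3 by (intro sum.cong refl) (auto simp: case_prod_beta)
  also have "\<dots> = (\<Sum>i<p. \<Sum>l<2. D (i, j0, l) (i, j0', l))"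
  proof (rule sum.cong[OF refl])
    fix i
    have "(\<Sum>jj<kA. \<Sum>l<2. if jj = j0 then D (i, jj, l) (i, j0', l) else 0) =
          (\<Sum>jj<kA. if jj = j0 then (\<Sum>l<2. D (i, jj, l) (i, j0', l)) else 0)"
      by (intro sum.cong refl) auto
    also have "\<dots> = (\<Sum>l<2. D (i, j0, l) (i, j0', l))" using j by (simp add: sum.delta sum.delta')
    finally show "(\<Sum>jj<kA. \<Sum>l<2. if jj = j0 then D (i, jj, l) (i, j0', l) else 0) = (\<Sum>l<2. D (i, j0, l) (i, j0', l))" .
  qed
  also have "\<dots> = (\<Sum>i<p. \<Sum>l<2. \<Sum>s0<\<zeta>. (\<lambda>s. A s (j0 * (r div kA) + x) * B s (j0' * (w div kB) + y)) ((2*i+l)*\<zeta> + s0))"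
    unfolding D_def Dab_def by simp
  also have "\<dots> = (\<Sum>s<2*p*\<zeta>. A s (j0 * (r div kA) + x) * B s (j0' * (w div kB) + y))"
    by (rule blocksum)
  also have "\<dots> = mmul t (mtrans A) B (j0 * (r div kA) + x) (j0' * (w div kB) + y)"
    unfolding mmul_def mtrans_def \<zeta>_def using t by simp
  finally show ?thesis unfolding fac_def m0_def K_def n0_def by simp
qed


lemma wq_inj:
  assumes q: "0 < q" and xy: "x < q" "y < q" and e: "wq q (int x) = wq q (int y)"
  shows "x = y"
proof (rule ccontr)
  assume ne: "x \<noteq> y"
  have nd: "\<not> int q dvd (int x - int y)"
  proof
    assume h: "int q dvd (int x - int y)"
    have "\<bar>int q\<bar> \<le> \<bar>int x - int y\<bar>" using h ne by (intro dvd_imp_le_int) auto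
    then show False using xy by linarith
  qed
  have "wq q (int x - int y) = wq q (int x) * wq q (- int y)" unfolding wq_diff wq_cnj ..
  also have "\<dots> = wq q (int y + - int y)" unfolding e wq_add ..
  also have "\<dots> = 1" by (simp add: wq_def)
  finally show False using wq_neq1[OF q nd] by simp
qed

lemma key1:
  fixes n p kA kB q t r w :: nat and i :: "nat \<Rightarrow> nat"
  assumes p: "0 < p" "0 < kA" "0 < kB" and nq: "n \<le> q" and tn: "2 * kA * kB * p - 1 < n"
    and dv: "2 * p dvd t" "kA dvd r" "kB dvd w"
    and ib: "\<forall>b < 2 * p * kA * kB - 1. i b < n" and inj: "inj_on i {..< 2 * p * kA * kB - 1}"
    and eq: "\<forall>b<2 * p * kA * kB - 1. \<forall>x'<r div kA. \<forall>y'<w div kB.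
         worker_out q p kA kB t r w A B (i b) x' y' = worker_out q p kA kB t r w A' B' (i b) x' y'"
    and x: "x < r" and y: "y < w"
  shows "mmul t (mtrans A) B x y = mmul t (mtrans A') B' x y"
proof -
  define N where "N = 2 * p * kA * kB - 1"
  define K where "K = int (p*kA*kB) - 1"
  define cA where "cA = r div kA"
  define cB where "cB = w div kB"
  have rr: "r = kA * cA" using dv unfolding cA_def by simp
  have ww: "w = kB * cB" using dv unfolding cB_def by simp
  have cA0: "0 < cA" using x rr by (cases cA) auto
  have cB0: "0 < cB" using y ww by (cases cB) auto
  define j0 where "j0 = x div cA"
  define x' where "x' = x mod cA"
  define j0' where "j0' = y div cB"
  define y' where "y' = y mod cB"
  have j0: "j0 < kA" unfolding j0_def using x rr cA0 by (simp add: div_less_iff_less_mult mult.commute)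
  have j0': "j0' < kB" unfolding j0'_def using y ww cB0 by (simp add: div_less_iff_less_mult mult.commute)
  have x': "x' < cA" "x = j0 * cA + x'" unfolding x'_def j0_def using cA0 by auto
  have y': "y' < cB" "y = j0' * cB + y'" unfolding y'_def j0'_def using cB0 by auto
  have q0: "0 < q" using tn nq by linarith
  have tq: "N < q" unfolding N_def using tn nq by (simp add: mult_ac)
  have ibq: "\<forall>b<N. i b < q" using ib nq unfolding N_def by fastforce
  define z where "z b = wq q (int (i b))" for b
  have zinj: "inj_on z {..<N}"
    using inj ibq wq_inj[OF q0] unfolding z_def N_def inj_on_def by (metis lessThan_iff)
  have ceq: "\<forall>nn<N. coefs p kA kB t r w A B x' y' nn - coefs p kA kB t r w A' B' x' y' nn = 0"
  proof (rule vand_zero[OF zinj], intro allI impI)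
    fix b assume b: "b < N"
    have "(\<Sum>nn<N. (coefs p kA kB t r w A B x' y' nn - coefs p kA kB t r w A' B' x' y' nn) * z b ^ nn)
      = (\<Sum>nn<N. coefs p kA kB t r w A B x' y' nn * wq q (int (i b) * int nn))
        - (\<Sum>nn<N. coefs p kA kB t r w A' B' x' y' nn * wq q (int (i b) * int nn))"
      unfolding z_def wq_pow by (simp add: left_diff_distrib sum_subtractf)
    also have "\<dots> = wq q (int (i b) * K) * of_real (worker_out q p kA kB t r w A B (i b) x' y')
        - wq q (int (i b) * K) * of_real (worker_out q p kA kB t r w A' B' (i b) x' y')"
      unfolding N_def K_def poly_rep[OF p] ..
    also have "\<dots> = 0" using eq b x'(1) y'(1) unfolding N_def cA_def cB_def by simp
    finally show "(\<Sum>nn<N. (coefs p kA kB t r w A B x' y' nn - coefs p kA kB t r w A' B' x' y' nn) * z b ^ nn) = 0" .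
  qed
  define m0 where "m0 = int j0 * int p + int j0' * int p * int kA"
  have m0r: "m0 \<le> K"
    using mab_range[of "(0, j0, 0)" p kA "(0, j0', 0)" kB] j0 j0' p
    unfolding m0_def K_def mab_def by simp
  have m00: "0 \<le> m0" unfolding m0_def by simp
  have n0: "nat (K + m0) < N" using m0r m00 p unfolding N_def K_def by (simp add: nat_less_iff mult_ac)
  have t: "t = 2*p*(t div (2*p))" using dv by simp
  have "mmul t (mtrans A) B x y = Re (coefs p kA kB t r w A B x' y' (nat (K + m0))) * (if m0 = 0 then 1 else 2)"
    unfolding x'(2) y'(2) cA_def cB_def K_def m0_def by (rule extract_lem[OF p t j0 j0'])
  also have "\<dots> = Re (coefs p kA kB t r w A' B' x' y' (nat (K + m0))) * (if m0 = 0 then 1 else 2)"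
    using ceq n0 by simp
  also have "\<dots> = mmul t (mtrans A') B' x y"
    unfolding x'(2) y'(2) cA_def cB_def K_def m0_def by (rule extract_lem[OF p t j0 j0', symmetric])
  finally show ?thesis .
qed


theorem theorem5:
  shows
  "(\<forall>(n::nat) (p::nat) (kA::nat) (kB::nat) (q::nat) (t::nat) (r::nat) (w::nat) (i::nat \<Rightarrow> nat).
      0 < p \<and> 0 < kA \<and> 0 < kB \<and> odd q \<and> n \<le> q \<and> 2 * kA * kB * p - 1 < n \<and>
      2 * p dvd t \<and> kA dvd r \<and> kB dvd w \<and>
      (\<forall>b < 2 * p * kA * kB - 1. i b < n) \<and> inj_on i {..< 2 * p * kA * kB - 1} \<longrightarrow>
      (\<exists>dec :: (nat \<Rightarrow> nat \<Rightarrow> nat \<Rightarrow> real) \<Rightarrow> nat \<Rightarrow> nat \<Rightarrow> real.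
        \<forall>A B :: nat \<Rightarrow> nat \<Rightarrow> real. \<forall>x<r. \<forall>y<w.
          mmul t (mtrans A) B x y =
          dec (\<lambda>b x' y'. if b < 2 * p * kA * kB - 1 \<and> x' < r div kA \<and> y' < w div kB
                          then worker_out q p kA kB t r w A B (i b) x' y' else 0) x y))
   \<and>
   (\<exists>C::real. \<forall>(n::nat) (p::nat) (kA::nat) (kB::nat) (q::nat) (i::nat \<Rightarrow> nat).
      0 < p \<and> 0 < kA \<and> 0 < kB \<and> odd q \<and> n \<le> q \<and> 2 * kA * kB * p - 1 < n \<and>
      (\<forall>b < 2 * p * kA * kB - 1. i b < n) \<and> inj_on i {..< 2 * p * kA * kB - 1} \<longrightarrow>
      cond_num (2 * p * kA * kB - 1) (Gvand q p kA kB i)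
        \<le> C * real q powr (real q - real (2 * p * kA * kB - 1) + 5.5))"
proof (rule conjI)
  show "\<forall>(n::nat) (p::nat) (kA::nat) (kB::nat) (q::nat) (t::nat) (r::nat) (w::nat) (i::nat \<Rightarrow> nat).
      0 < p \<and> 0 < kA \<and> 0 < kB \<and> odd q \<and> n \<le> q \<and> 2 * kA * kB * p - 1 < n \<and>
      2 * p dvd t \<and> kA dvd r \<and> kB dvd w \<and>
      (\<forall>b < 2 * p * kA * kB - 1. i b < n) \<and> inj_on i {..< 2 * p * kA * kB - 1} \<longrightarrow>
      (\<exists>dec :: (nat \<Rightarrow> nat \<Rightarrow> nat \<Rightarrow> real) \<Rightarrow> nat \<Rightarrow> nat \<Rightarrow> real.
        \<forall>A B :: nat \<Rightarrow> nat \<Rightarrow> real. \<forall>x<r. \<forall>y<w.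
          mmul t (mtrans A) B x y =
          dec (\<lambda>b x' y'. if b < 2 * p * kA * kB - 1 \<and> x' < r div kA \<and> y' < w div kB
                          then worker_out q p kA kB t r w A B (i b) x' y' else 0) x y)"
  proof (intro allI impI)
    fix n p kA kB q t r w :: nat and i :: "nat \<Rightarrow> nat"
    assume h: "0 < p \<and> 0 < kA \<and> 0 < kB \<and> odd q \<and> n \<le> q \<and> 2 * kA * kB * p - 1 < n \<and>
      2 * p dvd t \<and> kA dvd r \<and> kB dvd w \<and>
      (\<forall>b < 2 * p * kA * kB - 1. i b < n) \<and> inj_on i {..< 2 * p * kA * kB - 1}"
    define out where "out A B = (\<lambda>b x' y'. if b < 2 * p * kA * kB - 1 \<and> x' < r div kA \<and> y' < w div kB
                          then worker_out q p kA kB t r w A B (i b) x' y' else 0)"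
      for A B :: "nat \<Rightarrow> nat \<Rightarrow> real"
    define dec where "dec Ov x y = (let AB = (SOME AB. Ov = out (fst AB) (snd AB)) in
       mmul t (mtrans (fst AB)) (snd AB) x y)" for Ov and x y :: nat
    have "\<forall>A B :: nat \<Rightarrow> nat \<Rightarrow> real. \<forall>x<r. \<forall>y<w. mmul t (mtrans A) B x y = dec (out A B) x y"
    proof (intro allI impI)
      fix A B :: "nat \<Rightarrow> nat \<Rightarrow> real" and x y assume x: "x < r" and y: "y < w"
      define AB where "AB = (SOME AB. out A B = out (fst AB) (snd AB))"
      have "out A B = out (fst AB) (snd AB)" unfolding AB_def
        by (rule someI[where x="(A, B)"]) simp
      then have eq: "\<forall>b<2 * p * kA * kB - 1. \<forall>x'<r div kA. \<forall>y'<w div kB.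
         worker_out q p kA kB t r w A B (i b) x' y' = worker_out q p kA kB t r w (fst AB) (snd AB) (i b) x' y'"
        unfolding out_def by (metis (no_types, lifting))
      have "mmul t (mtrans A) B x y = mmul t (mtrans (fst AB)) (snd AB) x y"
        using h eq x y by (intro key1[of p kA kB n q t r w i]) auto
      then show "mmul t (mtrans A) B x y = dec (out A B) x y" unfolding dec_def AB_def Let_def by simp
    qed
    then show "\<exists>dec :: (nat \<Rightarrow> nat \<Rightarrow> nat \<Rightarrow> real) \<Rightarrow> nat \<Rightarrow> nat \<Rightarrow> real.
        \<forall>A B :: nat \<Rightarrow> nat \<Rightarrow> real. \<forall>x<r. \<forall>y<w.
          mmul t (mtrans A) B x y =
          dec (\<lambda>b x' y'. if b < 2 * p * kA * kB - 1 \<and> x' < r div kA \<and> y' < w div kB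
                          then worker_out q p kA kB t r w A B (i b) x' y' else 0) x y"
      unfolding out_def by blast
  qed
next
  show "\<exists>C::real. \<forall>(n::nat) (p::nat) (kA::nat) (kB::nat) (q::nat) (i::nat \<Rightarrow> nat).
      0 < p \<and> 0 < kA \<and> 0 < kB \<and> odd q \<and> n \<le> q \<and> 2 * kA * kB * p - 1 < n \<and>
      (\<forall>b < 2 * p * kA * kB - 1. i b < n) \<and> inj_on i {..< 2 * p * kA * kB - 1} \<longrightarrow>
      cond_num (2 * p * kA * kB - 1) (Gvand q p kA kB i)
        \<le> C * real q powr (real q - real (2 * p * kA * kB - 1) + 5.5)"
    by (rule part2_final)
qed


end
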